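(* Let $G=G(\{h_i,n_i\})$ be as in the context, with $n_i=h_i^{15}$ and $h_i\geq F(n_{i-1}h_{i-1}^2)$ for all $i\geq1$, where $F:\mathbb{N}\to\mathbb{N}$ is a suitable (sufficiently fast-growing) function depending only on $\rho$. Then for simple random walk on $G$: (1) for every integer $h\geq1$, $\mathbb{P}_0(\tau_h<\tau_0)=h^{-1}$; (2) for every $i\geq1$ and every vertex $v$ with $0\leq \mathrm{ht}(v)<h_i$, $\mathbb{E}_v(\tau_{h_i}\wedge\tau_0)\leq 2h_i^2$.
   Context: Construction of $G(\{h_i,n_i\})$: fix $\rho<1$; let $(h_i)_{i\geq0},(n_i)_{i\geq0}$ be increasing sequences of positive integers; let $(E_i)_{i\geq1}$ be $3$-regular graphs with $|E_i|=n_i$ whose transition matrices have all eigenvalues other than $1$ of absolute value at most $\rho$, and $v_i\in E_i$ arbitrary. $G$ consists of the half-line $\mathbb{N}=\{0,1,\ldots\}$ with edges between consecutive integers, together with each $E_i$ attached by a single edge between $v_i$ and the integer vertex $h_i$. The height $\mathrm{ht}(v)$ of a vertex is $h_i$ if $v\in E_i$ and $v$ itself if $v\in\mathbb{N}$. For a vertex $u$, $\tau_u=\min\{t\geq1:X_t=u\}$. *)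

theory Defs
  imports "HOL-Analysis.Analysis" "Jordan_Normal_Form.Char_Poly"
begin

definition trans_mat :: "nat \<Rightarrow> (nat \<Rightarrow> nat \<Rightarrow> bool) \<Rightarrow> real mat" where
  "trans_mat m R = mat m m (\<lambda>(x, y). if R x y then 1 / 3 else 0)"

text \<open>3-regular simple graph on m vertices whose transition matrix has all eigenvalues
other than (one copy of) the eigenvalue 1 of absolute value at most rho, eigenvalues
counted with algebraic multiplicity as roots of the characteristic polynomial.\<close>

definition cubic_expander :: "real \<Rightarrow> nat \<Rightarrow> (nat \<Rightarrow> nat \<Rightarrow> bool) \<Rightarrow> bool" where
  "cubic_expander \<rho> m R \<longleftrightarrow>
     (\<forall>x<m. \<forall>y<m. R x y \<longleftrightarrow> R y x) \<and>
     (\<forall>x<m. \<not> R x x) \<and>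
     (\<forall>x<m. card {y. y < m \<and> R x y} = 3) \<and>
     (\<exists>q. char_poly (trans_mat m R) = [:-1, 1:] * q \<and>
          (\<forall>z::complex. poly (map_poly complex_of_real q) z = 0 \<longrightarrow> cmod z \<le> \<rho>))"

text \<open>L k is the integer vertex k of the half-line; X i x is vertex x (x < n i) of E_i, i \<ge> 1.\<close>

datatype vert = L nat | X nat nat

definition is_vertex :: "(nat \<Rightarrow> nat) \<Rightarrow> vert \<Rightarrow> bool" where
  "is_vertex n v = (case v of L k \<Rightarrow> True | X i x \<Rightarrow> 1 \<le> i \<and> x < n i)"

definition adjG :: "(nat \<Rightarrow> nat) \<Rightarrow> (nat \<Rightarrow> nat) \<Rightarrow> (nat \<Rightarrow> nat \<Rightarrow> nat \<Rightarrow> bool) \<Rightarrow> (nat \<Rightarrow> nat)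
    \<Rightarrow> vert \<Rightarrow> vert \<Rightarrow> bool" where
  "adjG h n E vv u w = (case (u, w) of
      (L a, L b) \<Rightarrow> a = b + 1 \<or> b = a + 1
    | (X i x, X j y) \<Rightarrow> i = j \<and> 1 \<le> i \<and> x < n i \<and> y < n i \<and> E i x y
    | (X i x, L b) \<Rightarrow> 1 \<le> i \<and> x = vv i \<and> b = h i
    | (L a, X j y) \<Rightarrow> 1 \<le> j \<and> y = vv j \<and> a = h j)"

definition ht :: "(nat \<Rightarrow> nat) \<Rightarrow> vert \<Rightarrow> nat" where
  "ht h v = (case v of L k \<Rightarrow> k | X i x \<Rightarrow> h i)"

definition srw_prob :: "('v \<Rightarrow> 'v \<Rightarrow> bool) \<Rightarrow> 'v \<Rightarrow> 'v \<Rightarrow> real" where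
  "srw_prob adj u w = (if adj u w then 1 / real (card {y. adj u y}) else 0)"

fun is_walk :: "('v \<Rightarrow> 'v \<Rightarrow> bool) \<Rightarrow> 'v \<Rightarrow> 'v list \<Rightarrow> bool" where
  "is_walk adj u [] = True"
| "is_walk adj u (w # ws) = (adj u w \<and> is_walk adj w ws)"

text \<open>Probability that the walk started at u performs the steps X_1..X_t = ws.\<close>
fun walk_weight :: "('v \<Rightarrow> 'v \<Rightarrow> bool) \<Rightarrow> 'v \<Rightarrow> 'v list \<Rightarrow> real" where
  "walk_weight adj u [] = 1"
| "walk_weight adj u (w # ws) = srw_prob adj u w * walk_weight adj w ws"

text \<open>P_v(tau_a = t and tau_a < tau_b), with tau_u = min{t \<ge> 1 : X_t = u}.\<close>
definition first_hit_before :: "('v \<Rightarrow> 'v \<Rightarrow> bool) \<Rightarrow> 'v \<Rightarrow> 'v \<Rightarrow> 'v \<Rightarrow> nat \<Rightarrow> real" where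
  "first_hit_before adj v a b t =
     (if t = 0 then 0 else
      (\<Sum>ws\<in>{ws. length ws = t \<and> is_walk adj v ws \<and> last ws = a \<and>
                 a \<notin> set (butlast ws) \<and> b \<notin> set (butlast ws)}. walk_weight adj v ws))"

text \<open>P_v(tau_a < tau_b).\<close>
definition hit_before :: "('v \<Rightarrow> 'v \<Rightarrow> bool) \<Rightarrow> 'v \<Rightarrow> 'v \<Rightarrow> 'v \<Rightarrow> ennreal" where
  "hit_before adj v a b = (\<Sum>t. ennreal (first_hit_before adj v a b t))"

text \<open>P_v(min(tau_a, tau_b) = t).\<close>
definition exit_dist :: "('v \<Rightarrow> 'v \<Rightarrow> bool) \<Rightarrow> 'v \<Rightarrow> 'v \<Rightarrow> 'v \<Rightarrow> nat \<Rightarrow> real" where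
  "exit_dist adj v a b t =
     (if t = 0 then 0 else
      (\<Sum>ws\<in>{ws. length ws = t \<and> is_walk adj v ws \<and> (last ws = a \<or> last ws = b) \<and>
                 a \<notin> set (butlast ws) \<and> b \<notin> set (butlast ws)}. walk_weight adj v ws))"

text \<open>E_v(min(tau_a, tau_b)) in [0, \<infinity>]: sum of t P(min = t) plus \<infinity> times P(min = \<infinity>).\<close>
definition exp_exit :: "('v \<Rightarrow> 'v \<Rightarrow> bool) \<Rightarrow> 'v \<Rightarrow> 'v \<Rightarrow> 'v \<Rightarrow> ennreal" where
  "exp_exit adj v a b =
     (\<Sum>t. of_nat t * ennreal (exit_dist adj v a b t))
     + (\<infinity>::ennreal) * (1 - (\<Sum>t. ennreal (exit_dist adj v a b t)))"

end

theory Submission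
  imports Defs
begin


lemma det_perm_sym:
  fixes A :: "'a :: comm_ring_1 mat"
  assumes A: "A \<in> carrier_mat n n" and p: "p permutes {0..<n}"
  shows "det (mat n n (\<lambda>(i,j). A $$ (p i, p j))) = det A"
proof -
  define B where "B = mat n n (\<lambda>(i,j). A $$ (p i, j))"
  have B: "B \<in> carrier_mat n n" unfolding B_def by auto
  have dB: "det B = of_int (sign p) * det A" unfolding B_def by (rule det_permute_rows[OF A p])
  have pl: "p i < n" if "i < n" for i using p that by (simp add: permutes_in_image)
  have eq: "mat n n (\<lambda>(i,j). transpose_mat B $$ (p i, j)) = transpose_mat (mat n n (\<lambda>(i,j). A $$ (p i, p j)))"
    by (rule eq_matI, insert B pl, auto simp: B_def)
  have "det (transpose_mat (mat n n (\<lambda>(i,j). A $$ (p i, p j)))) = of_int (sign p) * det (transpose_mat B)"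
    unfolding eq[symmetric] by (rule det_permute_rows[OF _ p], insert B, auto)
  also have "\<dots> = of_int (sign p) * (of_int (sign p) * det A)" using det_transpose[OF B] dB by simp
  also have "\<dots> = (of_int (sign p) * of_int (sign p)) * det A" by (simp add: mult.assoc)
  also have "of_int (sign p) * of_int (sign p) = (1::'a)"
  proof -
    have "of_int (sign p) \<in> {1::'a, -1}" by (rule signof_pm_one)
    then show ?thesis by (auto simp del: of_int_mult)
  qed
  finally show ?thesis by (subst (asm) det_transpose, auto)
qed

lemma sum_nth_distinct:
  assumes "distinct us"
  shows "(\<Sum>j<length us. f (us ! j)) = (\<Sum>y\<in>set us. f y)"
  using sum.reindex_bij_betw[OF bij_betw_nth[OF assms refl refl], of f] by (simp add: atLeast0LessThan)

lemma block_det_root: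
  fixes R :: "nat \<Rightarrow> nat \<Rightarrow> bool"
  assumes deg: "\<forall>x<m. card {y. y < m \<and> R x y} = 3"
    and U: "set us \<subseteq> {0..<m}" and cl: "\<forall>x\<in>set us. \<forall>y<m. R x y \<longrightarrow> y \<in> set us"
    and d: "distinct us" and ne: "us \<noteq> []"
  shows "poly (det (mat (length us) (length us) (\<lambda>(i,j). char_poly_matrix (trans_mat m R) $$ (us!i, us!j)))) 1 = 0"
proof -
  let ?l = "length us"
  let ?A = "trans_mat m R"
  let ?M = "mat ?l ?l (\<lambda>(i,j). char_poly_matrix ?A $$ (us!i, us!j))"
  define N where "N = map_mat (\<lambda>p. poly p 1) ?M"
  have usm: "us ! i < m" if "i < ?l" for i using U that nth_mem by fastforce
  have Nij: "N $$ (i,j) = (if i = j then 1 else 0) - (if R (us!i) (us!j) then 1/3 else 0)"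
    if "i < ?l" "j < ?l" for i j
    using that usm[OF that(1)] usm[OF that(2)] nth_eq_iff_index_eq[OF d that]
    by (auto simp: N_def char_poly_matrix_def trans_mat_def)
  have N: "N \<in> carrier_mat ?l ?l" unfolding N_def by auto
  define w where "w = vec ?l (\<lambda>_. 1::real)"
  have Nw: "N *\<^sub>v w = 0\<^sub>v ?l"
  proof (rule eq_vecI)
    fix i assume i: "i < dim_vec (0\<^sub>v ?l :: real vec)"
    hence i: "i < ?l" by simp
    let ?x = "us ! i"
    have xU: "?x \<in> set us" using i by simp
    have "(N *\<^sub>v w) $ i = (\<Sum>j<?l. N $$ (i,j))"
      using N i by (simp add: w_def mult_mat_vec_def scalar_prod_def row_def atLeast0LessThan)
    also have "\<dots> = (\<Sum>j<?l. (if i = j then 1 else 0)) - (\<Sum>j<?l. (if R ?x (us!j) then 1/3 else 0))"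
      using Nij i by (simp add: sum_subtractf)
    also have "(\<Sum>j<?l. (if i = j then 1 else (0::real))) = 1" using i by simp
    also have "(\<Sum>j<?l. (if R ?x (us!j) then 1/3 else (0::real))) = (\<Sum>y\<in>set us. (if R ?x y then 1/3 else 0))"
      by (rule sum_nth_distinct[OF d])
    also have "\<dots> = (\<Sum>y\<in>{y\<in>set us. R ?x y}. 1/3)"
      by (rule sum.inter_filter[symmetric]) simp
    also have "{y\<in>set us. R ?x y} = {y. y < m \<and> R ?x y}" using cl xU U by auto
    also have "(\<Sum>y\<in>{y. y < m \<and> R ?x y}. 1/3) = (1::real)" using deg usm[OF i] by auto
    finally show "(N *\<^sub>v w) $ i = 0\<^sub>v ?l $ i" using i by simp
  qed (insert N, simp add: w_def)
  have w0: "w \<noteq> 0\<^sub>v ?l"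
  proof
    assume "w = 0\<^sub>v ?l"
    hence "w $ 0 = 0\<^sub>v ?l $ 0" by simp
    with ne show False by (simp add: w_def)
  qed
  have "det N = 0"
    unfolding det_0_iff_vec_prod_zero[OF N]
    by (rule exI[of _ w], insert Nw w0, auto simp: w_def)
  moreover have "det N = poly (det ?M) 1" unfolding N_def by (rule comm_ring_hom.hom_det[OF poly_hom.comm_ring_hom_axioms])
  ultimately show ?thesis by simp
qed

lemma expander_closed_all:
  assumes ce: "cubic_expander \<rho> m R" and rho: "\<rho> < 1"
    and S: "S \<subseteq> {0..<m}" "S \<noteq> {}" and cl: "\<forall>x\<in>S. \<forall>y<m. R x y \<longrightarrow> y \<in> S"
  shows "S = {0..<m}"
proof (rule ccontr)
  assume neq: "S \<noteq> {0..<m}"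
  define T where "T = {0..<m} - S"
  have Tne: "T \<noteq> {}" using neq S unfolding T_def by auto
  from ce have sym: "\<forall>x<m. \<forall>y<m. R x y \<longleftrightarrow> R y x" and deg: "\<forall>x<m. card {y. y < m \<and> R x y} = 3"
    unfolding cubic_expander_def by auto
  from ce obtain q where cp: "char_poly (trans_mat m R) = [:-1, 1:] * q"
    and roots: "\<forall>z::complex. poly (map_poly complex_of_real q) z = 0 \<longrightarrow> cmod z \<le> \<rho>"
    unfolding cubic_expander_def by auto
  have clT: "\<forall>x\<in>T. \<forall>y<m. R x y \<longrightarrow> y \<in> T"
  proof (intro ballI allI impI)
    fix x y assume x: "x \<in> T" and y: "y < m" and r: "R x y"
    show "y \<in> T"
    proof (rule ccontr)
      assume "y \<notin> T"
      hence "y \<in> S" using y unfolding T_def by auto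
      moreover have "R y x" using sym r x y unfolding T_def by auto
      ultimately have "x \<in> S" using cl x unfolding T_def by auto
      thus False using x unfolding T_def by auto
    qed
  qed
  have fS: "finite S" using S finite_subset by blast
  have fT: "finite T" unfolding T_def by auto
  define xs where "xs = sorted_list_of_set S"
  define ys where "ys = sorted_list_of_set T"
  have xs: "distinct xs" "set xs = S" using fS by (auto simp: xs_def)
  have ys: "distinct ys" "set ys = T" using fT by (auto simp: ys_def)
  define k where "k = length xs"
  define l where "l = length ys"
  have disj: "S \<inter> T = {}" unfolding T_def by auto
  have un: "S \<union> T = {0..<m}" using S unfolding T_def by auto
  have klm: "k + l = m"
  proof -
    have "k = card S" using distinct_card[OF xs(1)] xs(2) k_def by simp
    moreover have "l = card T" using distinct_card[OF ys(1)] ys(2) l_def by simp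
    moreover have "card S + card T = m" using card_Un_disjoint[OF fS fT disj] un by simp
    ultimately show ?thesis by simp
  qed
  define zs where "zs = xs @ ys"
  have zs: "distinct zs" "set zs = {0..<m}" "length zs = m"
    using xs ys disj un klm by (auto simp: zs_def k_def l_def)
  define p where "p = (\<lambda>i. if i < m then zs ! i else i)"
  have bz: "bij_betw ((!) zs) {0..<m} {0..<m}"
    using bij_betw_nth[OF zs(1) _ zs(2)[symmetric]] zs(3) by (simp add: atLeast0LessThan)
  have "bij_betw p {0..<m} {0..<m}"
    by (rule bij_betw_cong[THEN iffD1, OF _ bz], simp add: p_def)
  hence p: "p permutes {0..<m}" by (rule bij_imp_permutes, simp add: p_def)
  define A where "A = trans_mat m R"
  have A: "A \<in> carrier_mat m m" unfolding A_def trans_mat_def by simp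
  define C where "C = char_poly_matrix A"
  have C: "C \<in> carrier_mat m m" unfolding C_def using A by simp
  define M1 where "M1 = mat k k (\<lambda>(i,j). C $$ (xs!i, xs!j))"
  define M2 where "M2 = mat l l (\<lambda>(i,j). C $$ (ys!i, ys!j))"
  have Cz: "C $$ (x, y) = 0" if "x \<in> S" "y \<in> T" for x y
  proof -
    have "x < m" "y < m" "x \<noteq> y" using that S disj unfolding T_def by auto
    moreover have "\<not> R x y" using cl that unfolding T_def by auto
    ultimately show ?thesis by (simp add: C_def A_def char_poly_matrix_def trans_mat_def)
  qed
  have Cz2: "C $$ (y, x) = 0" if "x \<in> S" "y \<in> T" for x y
  proof -
    have "x < m" "y < m" "x \<noteq> y" using that S disj unfolding T_def by auto
    moreover have "\<not> R y x"
    proof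
      assume "R y x"
      hence "x \<in> T" using clT that \<open>x < m\<close> by blast
      thus False using that disj by blast
    qed
    ultimately show ?thesis by (simp add: C_def A_def char_poly_matrix_def trans_mat_def)
  qed
  have zsn: "zs ! i = (if i < k then xs ! i else ys ! (i - k))" for i
    by (simp add: zs_def k_def nth_append)
  have xsS: "xs ! i \<in> S" if "i < k" for i using that xs(2) k_def nth_mem by blast
  have ysT: "ys ! i \<in> T" if "i < l" for i using that ys(2) l_def nth_mem by blast
  have D: "mat m m (\<lambda>(i,j). C $$ (p i, p j)) = four_block_mat M1 (0\<^sub>m k l) (0\<^sub>m l k) M2"
  proof (rule eq_matI)
    fix i j assume i: "i < dim_row (four_block_mat M1 (0\<^sub>m k l) (0\<^sub>m l k) M2)"
      and j: "j < dim_col (four_block_mat M1 (0\<^sub>m k l) (0\<^sub>m l k) M2)"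
    hence i: "i < m" and j: "j < m" using klm by (auto simp: M1_def M2_def)
    show "mat m m (\<lambda>(i,j). C $$ (p i, p j)) $$ (i, j) = four_block_mat M1 (0\<^sub>m k l) (0\<^sub>m l k) M2 $$ (i, j)"
      using i j klm xsS ysT Cz Cz2 by (auto simp: M1_def M2_def p_def zsn)
  qed (insert klm, auto simp: M1_def M2_def)
  have "char_poly A = det C" unfolding C_def char_poly_def ..
  also have "\<dots> = det (mat m m (\<lambda>(i,j). C $$ (p i, p j)))" by (rule det_perm_sym[OF C p, symmetric])
  also have "\<dots> = det M1 * det M2" unfolding D
    by (rule det_four_block_mat_lower_left_zero, auto simp: M1_def M2_def)
  finally have cpA: "char_poly A = det M1 * det M2" .
  have r1: "poly (det M1) 1 = 0" unfolding M1_def C_def A_def k_def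
    by (rule block_det_root[OF deg], insert xs S cl fS, auto)
  have r2: "poly (det M2) 1 = 0" unfolding M2_def C_def A_def l_def
    by (rule block_det_root[OF deg], insert ys Tne clT, auto simp: T_def)
  from r1 obtain s1 where s1: "det M1 = [:-1,1:] * s1" unfolding poly_eq_0_iff_dvd by (auto elim: dvdE)
  from r2 obtain s2 where s2: "det M2 = [:-1,1:] * s2" unfolding poly_eq_0_iff_dvd by (auto elim: dvdE)
  define P where "P = [:-1::real,1:]"
  have P0: "P \<noteq> 0" unfolding P_def by simp
  have "P * q = (P * s1) * (P * s2)"
    using cp cpA s1 s2 unfolding A_def P_def by metis
  also have "\<dots> = P * (s1 * (P * s2))" by (simp only: mult.assoc)
  finally have "q = s1 * (P * s2)" using P0 by simp
  hence "poly q 1 = 0" by (simp add: P_def)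
  hence "poly (map_poly complex_of_real q) 1 = 0" by (simp add: of_real_hom.poly_map_poly_1)
  with roots have "cmod 1 \<le> \<rho>" by blast
  with rho show False by simp
qed


fun Qf :: "('v \<Rightarrow> 'v \<Rightarrow> bool) \<Rightarrow> 'v \<Rightarrow> 'v \<Rightarrow> nat \<Rightarrow> 'v \<Rightarrow> real" where
  "Qf adj a b 0 v = 1"
| "Qf adj a b (Suc t) v = (\<Sum>w\<in>{w. adj v w \<and> w \<noteq> a \<and> w \<noteq> b}. srw_prob adj v w * Qf adj a b t w)"

lemma walk_weight_nonneg: "0 \<le> walk_weight adj v ws"
  by (induction ws arbitrary: v) (auto simp: srw_prob_def)

lemma srw_prob_nonneg: "0 \<le> srw_prob adj v w"
  by (auto simp: srw_prob_def)

lemma walks_finite: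
  assumes fin: "\<And>u. finite {w. adj u w}"
  shows "finite {ws. length ws = t \<and> is_walk adj v ws}"
proof (induction t arbitrary: v)
  case 0
  then show ?case by simp
next
  case (Suc t)
  have "{ws. length ws = Suc t \<and> is_walk adj v ws} \<subseteq>
        (\<lambda>(w,ws). w # ws) ` (SIGMA w:{w. adj v w}. {ws. length ws = t \<and> is_walk adj w ws})"
  proof
    fix ws assume "ws \<in> {ws. length ws = Suc t \<and> is_walk adj v ws}"
    then obtain w ws' where "ws = w # ws'" "length ws' = t" "adj v w" "is_walk adj w ws'"
      by (cases ws) auto
    thus "ws \<in> (\<lambda>(w,ws). w # ws) ` (SIGMA w:{w. adj v w}. {ws. length ws = t \<and> is_walk adj w ws})"
      by force
  qed
  moreover have "finite ((\<lambda>(w,ws). w # ws) ` (SIGMA w:{w. adj v w}. {ws. length ws = t \<and> is_walk adj w ws}))"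
    using fin Suc by auto
  ultimately show ?case by (rule finite_subset)
qed

lemma walk_decomp:
  assumes fin: "\<And>u. finite {w. adj u w}"
  shows "(\<Sum>ws\<in>{ws. length ws = Suc t \<and> is_walk adj v ws \<and> \<Phi> ws}. walk_weight adj v ws) =
         (\<Sum>w\<in>{w. adj v w}. srw_prob adj v w *
            (\<Sum>ws\<in>{ws. length ws = t \<and> is_walk adj w ws \<and> \<Phi> (w # ws)}. walk_weight adj w ws))"
proof -
  let ?B = "\<lambda>w. {ws. length ws = t \<and> is_walk adj w ws \<and> \<Phi> (w # ws)}"
  have eq: "{ws. length ws = Suc t \<and> is_walk adj v ws \<and> \<Phi> ws} = (\<lambda>(w,ws). w # ws) ` (SIGMA w:{w. adj v w}. ?B w)"
  proof
    show "{ws. length ws = Suc t \<and> is_walk adj v ws \<and> \<Phi> ws} \<subseteq> (\<lambda>(w,ws). w # ws) ` (SIGMA w:{w. adj v w}. ?B w)"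
    proof
      fix ws assume "ws \<in> {ws. length ws = Suc t \<and> is_walk adj v ws \<and> \<Phi> ws}"
      then obtain w ws' where "ws = w # ws'" "length ws' = t" "adj v w" "is_walk adj w ws'" "\<Phi> (w # ws')"
        by (cases ws) auto
      thus "ws \<in> (\<lambda>(w,ws). w # ws) ` (SIGMA w:{w. adj v w}. ?B w)" by force
    qed
  qed auto
  have inj: "inj_on (\<lambda>(w,ws). w # ws) (SIGMA w:{w. adj v w}. ?B w)"
    by (auto simp: inj_on_def)
  have finB: "finite (?B w)" for w
    by (rule finite_subset[OF _ walks_finite[OF fin, where t=t and v=w]]) auto
  have "(\<Sum>ws\<in>{ws. length ws = Suc t \<and> is_walk adj v ws \<and> \<Phi> ws}. walk_weight adj v ws)
        = (\<Sum>(w,ws)\<in>(SIGMA w:{w. adj v w}. ?B w). walk_weight adj v (w # ws))"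
    unfolding eq sum.reindex[OF inj] by (rule sum.cong) auto
  also have "\<dots> = (\<Sum>w\<in>{w. adj v w}. \<Sum>ws\<in>?B w. walk_weight adj v (w # ws))"
    by (rule sum.Sigma[symmetric], rule fin, rule ballI, rule finB)
  also have "\<dots> = (\<Sum>w\<in>{w. adj v w}. srw_prob adj v w * (\<Sum>ws\<in>?B w. walk_weight adj w ws))"
    by (simp add: sum_distrib_left)
  finally show ?thesis .
qed

lemma fhb_one:
  assumes fin: "\<And>u. finite {w. adj u w}"
  shows "first_hit_before adj v a b (Suc 0) = srw_prob adj v a"
proof -
  have "first_hit_before adj v a b (Suc 0) =
     (\<Sum>w\<in>{w. adj v w}. srw_prob adj v w * (if w = a then 1 else 0))"
    unfolding first_hit_before_def using walk_decomp[OF fin, where t=0 and v=v]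
    by (simp cong: sum.cong) (rule sum.cong, auto)
  also have "\<dots> = srw_prob adj v a"
    using fin[of v] by (auto simp: srw_prob_def if_distrib sum.delta cong: if_cong)
  finally show ?thesis .
qed

lemma cons_last_butlast:
  assumes "ws \<noteq> []"
  shows "last (w # ws) = last ws" "set (butlast (w # ws)) = insert w (set (butlast ws))"
  using assms by auto

lemma fhb_SucSuc:
  assumes fin: "\<And>u. finite {w. adj u w}"
  shows "first_hit_before adj v a b (Suc (Suc t)) =
     (\<Sum>w\<in>{w. adj v w \<and> w \<noteq> a \<and> w \<noteq> b}. srw_prob adj v w * first_hit_before adj w a b (Suc t))"
proof -
  have "first_hit_before adj v a b (Suc (Suc t)) =
     (\<Sum>w\<in>{w. adj v w}. srw_prob adj v w * (if w \<noteq> a \<and> w \<noteq> b then first_hit_before adj w a b (Suc t) else 0))"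
    unfolding first_hit_before_def
    apply (simp only: walk_decomp[OF fin] nat.distinct if_False)
    apply (rule sum.cong, simp)
    apply (auto simp: cons_last_butlast intro!: arg_cong[where f="\<lambda>S. sum _ S"])
    done
  also have "\<dots> = (\<Sum>w\<in>{w. adj v w \<and> w \<noteq> a \<and> w \<noteq> b}. srw_prob adj v w * first_hit_before adj w a b (Suc t))"
    using fin[of v] by (simp add: if_distrib sum.inter_filter[symmetric] cong: if_cong)
  finally show ?thesis .
qed

lemma exit_one:
  assumes fin: "\<And>u. finite {w. adj u w}"
  shows "exit_dist adj v a b (Suc 0) = (\<Sum>w\<in>{w. adj v w}. srw_prob adj v w * (if w = a \<or> w = b then 1 else 0))"
  unfolding exit_dist_def using walk_decomp[OF fin, where t=0 and v=v]
  by (simp cong: sum.cong) (rule sum.cong, auto)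

lemma exit_SucSuc:
  assumes fin: "\<And>u. finite {w. adj u w}"
  shows "exit_dist adj v a b (Suc (Suc t)) =
     (\<Sum>w\<in>{w. adj v w \<and> w \<noteq> a \<and> w \<noteq> b}. srw_prob adj v w * exit_dist adj w a b (Suc t))"
proof -
  have "exit_dist adj v a b (Suc (Suc t)) =
     (\<Sum>w\<in>{w. adj v w}. srw_prob adj v w * (if w \<noteq> a \<and> w \<noteq> b then exit_dist adj w a b (Suc t) else 0))"
    unfolding exit_dist_def
    apply (simp only: walk_decomp[OF fin] nat.distinct if_False)
    apply (rule sum.cong, simp)
    apply (auto simp: cons_last_butlast intro!: arg_cong[where f="\<lambda>S. sum _ S"])
    done
  also have "\<dots> = (\<Sum>w\<in>{w. adj v w \<and> w \<noteq> a \<and> w \<noteq> b}. srw_prob adj v w * exit_dist adj w a b (Suc t))"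
    using fin[of v] by (simp add: if_distrib sum.inter_filter[symmetric] cong: if_cong)
  finally show ?thesis .
qed

lemma srw_sum_one:
  assumes "finite {w. adj v w}" "{w. adj v w} \<noteq> {}"
  shows "(\<Sum>w\<in>{w. adj v w}. srw_prob adj v w) = 1"
  using assms by (simp add: srw_prob_def)

lemma Qf_nonneg: "0 \<le> Qf adj a b t v"
  by (induction t arbitrary: v) (auto intro!: sum_nonneg mult_nonneg_nonneg srw_prob_nonneg)

lemma exit_dist_nonneg: "0 \<le> exit_dist adj v a b t"
  unfolding exit_dist_def by (auto intro!: sum_nonneg walk_weight_nonneg)

lemma fhb_nonneg: "0 \<le> first_hit_before adj v a b t"
  unfolding first_hit_before_def by (auto intro!: sum_nonneg walk_weight_nonneg)

lemma sum_split_ab: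
  fixes f :: "'v \<Rightarrow> real"
  assumes "finite N"
  shows "(\<Sum>w\<in>N. f w) = (\<Sum>w\<in>N. f w * (if w = a \<or> w = b then 1 else 0)) + (\<Sum>w\<in>{w\<in>N. w \<noteq> a \<and> w \<noteq> b}. f w)"
proof -
  have "(\<Sum>w\<in>{w\<in>N. w \<noteq> a \<and> w \<noteq> b}. f w) = (\<Sum>w\<in>N. if w \<noteq> a \<and> w \<noteq> b then f w else 0)"
    using assms by (rule sum.inter_filter)
  moreover have "(\<Sum>w\<in>N. f w) = (\<Sum>w\<in>N. f w * (if w = a \<or> w = b then 1 else 0) + (if w \<noteq> a \<and> w \<noteq> b then f w else 0))"
    by (rule sum.cong) auto
  ultimately show ?thesis by (simp add: sum.distrib)
qed

lemma exit_Q: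
  assumes fin: "\<And>u. finite {w. adj u w}"
    and ne: "\<And>u. u \<in> R \<Longrightarrow> {w. adj u w} \<noteq> {}"
    and clo: "\<And>u w. u \<in> R \<Longrightarrow> adj u w \<Longrightarrow> w \<noteq> a \<Longrightarrow> w \<noteq> b \<Longrightarrow> w \<in> R"
    and v: "v \<in> R"
  shows "exit_dist adj v a b (Suc t) = Qf adj a b t v - Qf adj a b (Suc t) v"
  using v
proof (induction t arbitrary: v)
  case 0
  have h1: "(\<Sum>w\<in>{w. adj v w}. srw_prob adj v w) =
    (\<Sum>w\<in>{w. adj v w}. srw_prob adj v w * (if w = a \<or> w = b then 1 else 0)) +
    (\<Sum>w\<in>{w\<in>{w. adj v w}. w \<noteq> a \<and> w \<noteq> b}. srw_prob adj v w)"
    by (rule sum_split_ab[OF fin])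
  have h2: "(\<Sum>w\<in>{w. adj v w}. srw_prob adj v w) = 1" using srw_sum_one[where adj=adj and v=v, OF fin[of v] ne[OF 0]] .
  have h3: "Qf adj a b (Suc 0) v = (\<Sum>w\<in>{w. adj v w \<and> w \<noteq> a \<and> w \<noteq> b}. srw_prob adj v w)" by simp
  have h4: "{w\<in>{w. adj v w}. w \<noteq> a \<and> w \<noteq> b} = {w. adj v w \<and> w \<noteq> a \<and> w \<noteq> b}" by auto
  have h0: "exit_dist adj v a b (Suc 0) = (\<Sum>w\<in>{w. adj v w}. srw_prob adj v w * (if w = a \<or> w = b then 1 else 0))"
    by (rule exit_one[OF fin])
  have h5: "Qf adj a b 0 v = 1" by simp
  show ?case using h0 h1 h2 h3 h5 unfolding h4 by linarith
next
  case (Suc t)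
  have "exit_dist adj v a b (Suc (Suc t)) =
     (\<Sum>w\<in>{w. adj v w \<and> w \<noteq> a \<and> w \<noteq> b}. srw_prob adj v w * (Qf adj a b t w - Qf adj a b (Suc t) w))"
    unfolding exit_SucSuc[OF fin] using Suc.IH clo Suc.prems by (intro sum.cong) auto
  also have "\<dots> = Qf adj a b (Suc t) v - Qf adj a b (Suc (Suc t)) v"
    by (simp add: right_diff_distrib sum_subtractf)
  finally show ?case .
qed

lemma super_bound:
  assumes fin: "\<And>u. finite {w. adj u w}"
    and clo: "\<And>u w. u \<in> R \<Longrightarrow> adj u w \<Longrightarrow> w \<noteq> a \<Longrightarrow> w \<noteq> b \<Longrightarrow> w \<in> R"
    and g0: "\<And>u. u \<in> R \<Longrightarrow> 0 \<le> g u"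
    and sup: "\<And>u. u \<in> R \<Longrightarrow> u \<noteq> a \<Longrightarrow> u \<noteq> b \<Longrightarrow>
        1 + (\<Sum>w\<in>{w. adj u w \<and> w \<noteq> a \<and> w \<noteq> b}. srw_prob adj u w * g w) \<le> g u"
    and v: "v \<in> R"
  shows "(\<Sum>t<n. Qf adj a b t v) \<le> 1 + (\<Sum>w\<in>{w. adj v w \<and> w \<noteq> a \<and> w \<noteq> b}. srw_prob adj v w * g w)"
  using v
proof (induction n arbitrary: v)
  case 0
  have "0 \<le> (\<Sum>w\<in>{w. adj v w \<and> w \<noteq> a \<and> w \<noteq> b}. srw_prob adj v w * g w)"
  proof (rule sum_nonneg)
    fix w assume "w \<in> {w. adj v w \<and> w \<noteq> a \<and> w \<noteq> b}"
    hence "w \<in> R" using clo[OF 0] by blast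
    thus "0 \<le> srw_prob adj v w * g w" by (rule mult_nonneg_nonneg[OF srw_prob_nonneg g0])
  qed
  then show ?case by simp
next
  case (Suc n)
  let ?N = "{w. adj v w \<and> w \<noteq> a \<and> w \<noteq> b}"
  have e1: "(\<Sum>t<Suc n. Qf adj a b t v) = 1 + (\<Sum>t<n. Qf adj a b (Suc t) v)"
    unfolding sum.lessThan_Suc_shift by simp
  have e2: "(\<Sum>t<n. Qf adj a b (Suc t) v) = (\<Sum>w\<in>?N. srw_prob adj v w * (\<Sum>t<n. Qf adj a b t w))"
    unfolding Qf.simps sum_distrib_left by (rule sum.swap)
  have e3: "(\<Sum>w\<in>?N. srw_prob adj v w * (\<Sum>t<n. Qf adj a b t w)) \<le> (\<Sum>w\<in>?N. srw_prob adj v w * g w)"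
  proof (rule sum_mono)
    fix w assume w: "w \<in> ?N"
    hence wR: "w \<in> R" using clo[OF Suc.prems] by blast
    from w have wa: "w \<noteq> a" and wb: "w \<noteq> b" by auto
    have "(\<Sum>t<n. Qf adj a b t w) \<le> g w"
      by (rule order_trans[OF Suc.IH[OF wR] sup[OF wR wa wb]])
    thus "srw_prob adj v w * (\<Sum>t<n. Qf adj a b t w) \<le> srw_prob adj v w * g w"
      by (rule mult_left_mono[OF _ srw_prob_nonneg])
  qed
  show ?case unfolding e1 e2 using e3 by linarith
qed

lemma exp_exit_bound:
  assumes fin: "\<And>u. finite {w. adj u w}"
    and ne: "\<And>u. u \<in> R \<Longrightarrow> {w. adj u w} \<noteq> {}"
    and clo: "\<And>u w. u \<in> R \<Longrightarrow> adj u w \<Longrightarrow> w \<noteq> a \<Longrightarrow> w \<noteq> b \<Longrightarrow> w \<in> R"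
    and g0: "\<And>u. u \<in> R \<Longrightarrow> 0 \<le> g u"
    and sup: "\<And>u. u \<in> R \<Longrightarrow> u \<noteq> a \<Longrightarrow> u \<noteq> b \<Longrightarrow>
        1 + (\<Sum>w\<in>{w. adj u w \<and> w \<noteq> a \<and> w \<noteq> b}. srw_prob adj u w * g w) \<le> g u"
    and v: "v \<in> R"
  shows "exp_exit adj v a b \<le> ennreal (1 + (\<Sum>w\<in>{w. adj v w \<and> w \<noteq> a \<and> w \<noteq> b}. srw_prob adj v w * g w))"
    and "(\<lambda>t. Qf adj a b t v) \<longlonglongrightarrow> 0"
proof -
  define B where "B = 1 + (\<Sum>w\<in>{w. adj v w \<and> w \<noteq> a \<and> w \<noteq> b}. srw_prob adj v w * g w)"
  define Q where "Q = (\<lambda>t. Qf adj a b t v)"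
  define E where "E = (\<lambda>t. exit_dist adj v a b t)"
  have Qb: "(\<Sum>t<n. Q t) \<le> B" for n unfolding Q_def B_def by (rule super_bound[OF fin clo g0 sup v])
  have Q0: "0 \<le> Q t" for t unfolding Q_def by (rule Qf_nonneg)
  have sQ: "summable Q" by (rule summableI_nonneg_bounded[OF Q0 Qb])
  have Qlim: "Q \<longlonglongrightarrow> 0" by (rule summable_LIMSEQ_zero[OF sQ])
  have E0: "E 0 = 0" unfolding E_def exit_dist_def by simp
  have ES: "E (Suc t) = Q t - Q (Suc t)" for t unfolding E_def Q_def by (rule exit_Q[OF fin ne clo v])
  have "(\<lambda>t. E (Suc t)) sums (Q 0 - 0)" unfolding ES by (rule telescope_sums'[OF Qlim])
  hence Es: "E sums 1" unfolding sums_Suc_iff by (simp add: E0 Q_def)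
  have En: "0 \<le> E t" for t unfolding E_def by (rule exit_dist_nonneg)
  have sumE: "(\<Sum>t. ennreal (E t)) = 1"
    using suminf_ennreal2[OF En sums_summable[OF Es]] sums_unique[OF Es] by simp
  have part: "(\<Sum>t<Suc n. real t * E t) = (\<Sum>t<n. Q t) - real n * Q n" for n
  proof (induction n)
    case 0 then show ?case by (simp add: E0)
  next
    case (Suc n)
    then show ?case by (simp add: ES algebra_simps)
  qed
  have pb: "(\<Sum>t<n. real t * E t) \<le> B" for n
  proof (cases n)
    case 0 then show ?thesis using Qb[of 0] by simp
  next
    case (Suc m)
    have "0 \<le> real m * Q m" using Q0 by simp
    then show ?thesis unfolding Suc part using Qb[of m] by simp
  qed
  have tEn: "0 \<le> real t * E t" for t using En by simp
  have stE: "summable (\<lambda>t. real t * E t)" by (rule summableI_nonneg_bounded[OF tEn pb])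
  have "(\<Sum>t. of_nat t * ennreal (E t)) = (\<Sum>t. ennreal (real t * E t))"
    by (rule suminf_cong) (simp add: ennreal_of_nat_eq_real_of_nat ennreal_mult En)
  also have "\<dots> = ennreal (\<Sum>t. real t * E t)" by (rule suminf_ennreal2[OF tEn stE])
  also have "\<dots> \<le> ennreal B" by (rule ennreal_leI, rule suminf_le_const[OF stE pb])
  finally have "(\<Sum>t. of_nat t * ennreal (E t)) \<le> ennreal B" .
  then show "exp_exit adj v a b \<le> ennreal B"
    unfolding exp_exit_def using sumE by (simp add: E_def)
  show "(\<lambda>t. Qf adj a b t v) \<longlonglongrightarrow> 0" using Qlim by (simp add: Q_def)
qed

fun Mf :: "('v \<Rightarrow> 'v \<Rightarrow> bool) \<Rightarrow> 'v \<Rightarrow> 'v \<Rightarrow> ('v \<Rightarrow> real) \<Rightarrow> nat \<Rightarrow> 'v \<Rightarrow> real" where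
  "Mf adj a b f 0 v = f v"
| "Mf adj a b f (Suc t) v = (\<Sum>w\<in>{w. adj v w \<and> w \<noteq> a \<and> w \<noteq> b}. srw_prob adj v w * Mf adj a b f t w)"

lemma hit_identity:
  assumes fin: "\<And>u. finite {w. adj u w}"
    and clo: "\<And>u w. u \<in> R \<Longrightarrow> adj u w \<Longrightarrow> w \<noteq> a \<Longrightarrow> w \<noteq> b \<Longrightarrow> w \<in> R"
    and harm: "\<And>u. u \<in> R \<Longrightarrow> u \<noteq> a \<Longrightarrow> u \<noteq> b \<Longrightarrow>
        srw_prob adj u a + (\<Sum>w\<in>{w. adj u w \<and> w \<noteq> a \<and> w \<noteq> b}. srw_prob adj u w * f w) = f u"
    and v: "v \<in> R" "v \<noteq> a" "v \<noteq> b"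
  shows "(\<Sum>t<n. first_hit_before adj v a b (Suc t)) + Mf adj a b f n v = f v"
  using v
proof (induction n arbitrary: v)
  case 0
  then show ?case by simp
next
  case (Suc n)
  let ?N = "{w. adj v w \<and> w \<noteq> a \<and> w \<noteq> b}"
  have e1: "(\<Sum>t<Suc n. first_hit_before adj v a b (Suc t)) = srw_prob adj v a + (\<Sum>t<n. first_hit_before adj v a b (Suc (Suc t)))"
    unfolding sum.lessThan_Suc_shift fhb_one[OF fin] ..
  have e2: "(\<Sum>t<n. first_hit_before adj v a b (Suc (Suc t))) = (\<Sum>w\<in>?N. srw_prob adj v w * (\<Sum>t<n. first_hit_before adj w a b (Suc t)))"
    unfolding fhb_SucSuc[OF fin] sum_distrib_left by (rule sum.swap)
  have e3: "Mf adj a b f (Suc n) v = (\<Sum>w\<in>?N. srw_prob adj v w * Mf adj a b f n w)" by simp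
  have e4: "(\<Sum>w\<in>?N. srw_prob adj v w * (\<Sum>t<n. first_hit_before adj w a b (Suc t))) + (\<Sum>w\<in>?N. srw_prob adj v w * Mf adj a b f n w)
      = (\<Sum>w\<in>?N. srw_prob adj v w * f w)"
    unfolding sum.distrib[symmetric] distrib_left[symmetric]
  proof (rule sum.cong[OF refl])
    fix w assume w: "w \<in> ?N"
    hence wR: "w \<in> R" using clo[OF Suc.prems(1)] by blast
    from w have wa: "w \<noteq> a" and wb: "w \<noteq> b" by auto
    show "srw_prob adj v w * ((\<Sum>t<n. first_hit_before adj w a b (Suc t)) + Mf adj a b f n w) = srw_prob adj v w * f w"
      using Suc.IH[OF wR wa wb] by simp
  qed
  show ?case unfolding e1 e2 e3 using e4 harm[OF Suc.prems] by linarith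
qed

lemma Mf_bounds:
  assumes clo: "\<And>u w. u \<in> R \<Longrightarrow> adj u w \<Longrightarrow> w \<noteq> a \<Longrightarrow> w \<noteq> b \<Longrightarrow> w \<in> R"
    and f0: "\<And>u. u \<in> R \<Longrightarrow> 0 \<le> f u" and f1: "\<And>u. u \<in> R \<Longrightarrow> f u \<le> 1"
    and v: "v \<in> R"
  shows "0 \<le> Mf adj a b f n v \<and> Mf adj a b f n v \<le> Qf adj a b n v"
  using v
proof (induction n arbitrary: v)
  case 0
  then show ?case using f0 f1 by simp
next
  case (Suc n)
  let ?N = "{w. adj v w \<and> w \<noteq> a \<and> w \<noteq> b}"
  have "\<forall>w\<in>?N. 0 \<le> srw_prob adj v w * Mf adj a b f n w \<and>
             srw_prob adj v w * Mf adj a b f n w \<le> srw_prob adj v w * Qf adj a b n w"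
  proof
    fix w assume w: "w \<in> ?N"
    hence wR: "w \<in> R" using clo[OF Suc.prems] by blast
    from Suc.IH[OF wR] show "0 \<le> srw_prob adj v w * Mf adj a b f n w \<and>
             srw_prob adj v w * Mf adj a b f n w \<le> srw_prob adj v w * Qf adj a b n w"
      using srw_prob_nonneg[of adj v w] by (auto intro: mult_left_mono mult_nonneg_nonneg)
  qed
  then show ?case by (auto intro!: sum_nonneg sum_mono)
qed

lemma fhb_sums_f:
  assumes fin: "\<And>u. finite {w. adj u w}"
    and clo: "\<And>u w. u \<in> R \<Longrightarrow> adj u w \<Longrightarrow> w \<noteq> a \<Longrightarrow> w \<noteq> b \<Longrightarrow> w \<in> R"
    and harm: "\<And>u. u \<in> R \<Longrightarrow> u \<noteq> a \<Longrightarrow> u \<noteq> b \<Longrightarrow>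
        srw_prob adj u a + (\<Sum>w\<in>{w. adj u w \<and> w \<noteq> a \<and> w \<noteq> b}. srw_prob adj u w * f w) = f u"
    and f0: "\<And>u. u \<in> R \<Longrightarrow> 0 \<le> f u" and f1: "\<And>u. u \<in> R \<Longrightarrow> f u \<le> 1"
    and Qlim: "(\<lambda>t. Qf adj a b t v) \<longlonglongrightarrow> 0"
    and v: "v \<in> R" "v \<noteq> a" "v \<noteq> b"
  shows "(\<lambda>t. first_hit_before adj v a b (Suc t)) sums f v"
proof -
  have M0: "(\<lambda>n. Mf adj a b f n v) \<longlonglongrightarrow> 0"
    by (rule tendsto_sandwich[OF _ _ tendsto_const Qlim])
       (use Mf_bounds[OF clo f0 f1 v(1)] in auto)
  have "(\<lambda>n. f v - Mf adj a b f n v) \<longlonglongrightarrow> f v - 0"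
    by (intro tendsto_diff tendsto_const M0)
  moreover have "(\<lambda>n. f v - Mf adj a b f n v) = (\<lambda>n. \<Sum>t<n. first_hit_before adj v a b (Suc t))"
    using hit_identity[OF fin clo harm v] by (auto simp: algebra_simps)
  ultimately show ?thesis unfolding sums_def by simp
qed

lemma hit_before_value:
  assumes fin: "\<And>u. finite {w. adj u w}"
    and clo: "\<And>u w. u \<in> R \<Longrightarrow> adj u w \<Longrightarrow> w \<noteq> a \<Longrightarrow> w \<noteq> b \<Longrightarrow> w \<in> R"
    and harm: "\<And>u. u \<in> R \<Longrightarrow> u \<noteq> a \<Longrightarrow> u \<noteq> b \<Longrightarrow>
        srw_prob adj u a + (\<Sum>w\<in>{w. adj u w \<and> w \<noteq> a \<and> w \<noteq> b}. srw_prob adj u w * f w) = f u"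
    and f0: "\<And>u. u \<in> R \<Longrightarrow> 0 \<le> f u" and f1: "\<And>u. u \<in> R \<Longrightarrow> f u \<le> 1"
    and Qlim: "\<And>u. u \<in> R \<Longrightarrow> (\<lambda>t. Qf adj a b t u) \<longlonglongrightarrow> 0"
    and v: "v \<in> R"
  shows "hit_before adj v a b = ennreal (srw_prob adj v a + (\<Sum>w\<in>{w. adj v w \<and> w \<noteq> a \<and> w \<noteq> b}. srw_prob adj v w * f w))"
proof -
  let ?N = "{w. adj v w \<and> w \<noteq> a \<and> w \<noteq> b}"
  let ?F = "\<lambda>t. first_hit_before adj v a b t"
  have finN: "finite ?N" using fin[of v] by (rule finite_subset[rotated]) auto
  have "(\<lambda>t. \<Sum>w\<in>?N. srw_prob adj v w * first_hit_before adj w a b (Suc t)) sums (\<Sum>w\<in>?N. srw_prob adj v w * f w)"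
  proof (rule sums_sum, rule sums_mult)
    fix w assume w: "w \<in> ?N"
    hence wR: "w \<in> R" using clo[OF v] by blast
    from w have wa: "w \<noteq> a" and wb: "w \<noteq> b" by auto
    show "(\<lambda>t. first_hit_before adj w a b (Suc t)) sums f w"
      by (rule fhb_sums_f[OF fin clo harm f0 f1 Qlim[OF wR] wR wa wb])
  qed
  hence "(\<lambda>t. ?F (Suc (Suc t))) sums (\<Sum>w\<in>?N. srw_prob adj v w * f w)"
    unfolding fhb_SucSuc[OF fin] .
  hence "(\<lambda>t. ?F (Suc t)) sums ((\<Sum>w\<in>?N. srw_prob adj v w * f w) + srw_prob adj v a)"
    using sums_Suc_iff[of "\<lambda>t. ?F (Suc t)"] fhb_one[OF fin] by simp
  hence "?F sums ((\<Sum>w\<in>?N. srw_prob adj v w * f w) + srw_prob adj v a)"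
    using sums_Suc_iff[of ?F] by (simp add: first_hit_before_def)
  hence S: "?F sums (srw_prob adj v a + (\<Sum>w\<in>?N. srw_prob adj v w * f w))" by (simp add: add.commute)
  have "hit_before adj v a b = (\<Sum>t. ennreal (?F t))" unfolding hit_before_def ..
  also have "\<dots> = ennreal (suminf ?F)" by (rule suminf_ennreal2[OF fhb_nonneg sums_summable[OF S]])
  also have "suminf ?F = srw_prob adj v a + (\<Sum>w\<in>?N. srw_prob adj v w * f w)" using S by (rule sums_unique[symmetric])
  finally show ?thesis .
qed


fun Bl :: "(nat \<Rightarrow> nat \<Rightarrow> bool) \<Rightarrow> nat \<Rightarrow> nat \<Rightarrow> nat \<Rightarrow> nat set" where
  "Bl R m v 0 = {v}"
| "Bl R m v (Suc k) = Bl R m v k \<union> {x. x < m \<and> (\<exists>y\<in>Bl R m v k. R y x)}"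

lemma Bl_mono: "k \<le> l \<Longrightarrow> Bl R m v k \<subseteq> Bl R m v l"
  by (induction l) (auto simp: le_Suc_eq)

lemma Bl_sub: "v < m \<Longrightarrow> Bl R m v k \<subseteq> {0..<m}"
  by (induction k) auto

lemma Bl_stable: "Bl R m v (Suc k) = Bl R m v k \<Longrightarrow> Bl R m v (k + j) = Bl R m v k"
  by (induction j) auto

lemma expander_phi:
  assumes ce: "cubic_expander \<rho> m R" and rho: "\<rho> < 1" and v: "v < m"
  shows "\<exists>phi::nat \<Rightarrow> real. (\<forall>x<m. 0 \<le> phi x \<and> phi x \<le> 4 + 8 * 4 ^ m) \<and>
     (\<forall>x<m. x \<noteq> v \<longrightarrow> 1 + (\<Sum>y\<in>{y. y < m \<and> R x y}. phi y) / 3 \<le> phi x) \<and>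
     1 + (\<Sum>y\<in>{y. y < m \<and> R v y}. phi y) / 4 \<le> phi v"
proof -
  from ce have sym: "\<forall>x<m. \<forall>y<m. R x y \<longleftrightarrow> R y x" and deg: "\<forall>x<m. card {y. y < m \<and> R x y} = 3"
    unfolding cubic_expander_def by auto
  let ?B = "Bl R m v"
  define S where "S = {x. \<exists>k. x \<in> ?B k}"
  have Ssub: "S \<subseteq> {0..<m}" using Bl_sub[OF v] unfolding S_def by blast
  have "S = {0..<m}"
  proof (rule expander_closed_all[OF ce rho Ssub])
    show "S \<noteq> {}" unfolding S_def using Bl.simps(1) by blast
    show "\<forall>x\<in>S. \<forall>y<m. R x y \<longrightarrow> y \<in> S"
    proof (intro ballI allI impI)
      fix x y assume "x \<in> S" "y < m" "R x y"
      then obtain k where "x \<in> ?B k" unfolding S_def by blast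
      hence "y \<in> ?B (Suc k)" using \<open>y < m\<close> \<open>R x y\<close> by auto
      thus "y \<in> S" unfolding S_def by blast
    qed
  qed
  hence conn: "\<exists>k. x \<in> ?B k" if "x < m" for x using that unfolding S_def by auto
  define d where "d x = (LEAST k. x \<in> ?B k)" for x
  have dB: "x \<in> ?B (d x)" if "x < m" for x
    unfolding d_def using conn[OF that] by (rule LeastI_ex)
  have dle: "d x \<le> k" if "x \<in> ?B k" for x k unfolding d_def using that by (rule Least_le)
  have d0: "d x = 0 \<Longrightarrow> x < m \<Longrightarrow> x = v" for x using dB[of x] by auto
  have dv: "d v = 0" using dle[of v 0] by simp
  have dnb: "d y \<le> d x + 1" if "x < m" "y < m" "R x y" for x y
    using dle[of y "Suc (d x)"] dB[OF that(1)] that by auto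
  have dpred: "\<exists>y. y < m \<and> R x y \<and> d y + 1 \<le> d x" if "x < m" "x \<noteq> v" for x
  proof -
    have "d x \<noteq> 0" using d0 that by auto
    then obtain k where k: "d x = Suc k" by (cases "d x") auto
    have "x \<notin> ?B k" using dle[of x k] k by auto
    moreover have "x \<in> ?B (Suc k)" using dB[OF that(1)] k by simp
    ultimately obtain y where y: "y \<in> ?B k" "R y x" by auto
    have ym: "y < m" using Bl_sub[OF v, of R k] y(1) by auto
    have "R x y" using sym y(2) ym that(1) by auto
    moreover have "d y \<le> k" using dle y(1) by auto
    ultimately show ?thesis using ym k by auto
  qed
  have dlt: "d x < m" if "x < m" for x
  proof -
    have strict: "?B k \<subset> ?B (Suc k)" if "k < d x" for k
    proof -
      have "?B k \<subseteq> ?B (Suc k)" by (rule Bl_mono) simp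
      moreover have "?B (Suc k) \<noteq> ?B k"
      proof
        assume "?B (Suc k) = ?B k"
        hence "?B (k + (d x - k)) = ?B k" by (rule Bl_stable)
        hence "x \<in> ?B k" using dB[OF \<open>x < m\<close>] \<open>k < d x\<close> by simp
        thus False using dle[of x k] \<open>k < d x\<close> by simp
      qed
      ultimately show ?thesis by auto
    qed
    have fin: "finite (?B k)" for k using Bl_sub[OF v] finite_subset by blast
    have "k + 1 \<le> card (?B k)" if "k \<le> d x" for k
      using that
    proof (induction k)
      case 0 then show ?case by simp
    next
      case (Suc k)
      have "?B k \<subset> ?B (Suc k)" using strict[of k] Suc.prems by (simp del: Bl.simps)
      hence "card (?B k) < card (?B (Suc k))" by (rule psubset_card_mono[OF fin])
      then show ?case using Suc by simp
    qed
    moreover have "card (?B (d x)) \<le> m"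
      using card_mono[OF _ Bl_sub[OF v]] by fastforce
    ultimately show ?thesis by fastforce
  qed
  define P where "P x = (4::real) ^ (m - d x)" for x
  define T where "T = 4 + 8 * (4::real) ^ m"
  define phi where "phi x = T - 2 * P x" for x
  have Ppos: "0 < P x" for x unfolding P_def by simp
  have Pge: "4 \<le> P x" if "x < m" for x
  proof -
    have "1 \<le> m - d x" using dlt[OF that] by simp
    hence "(4::real) ^ 1 \<le> 4 ^ (m - d x)" by (rule power_increasing) simp
    thus ?thesis unfolding P_def by simp
  qed
  have Ple: "P x \<le> 4 ^ m" for x unfolding P_def by (rule power_increasing) auto
  have Pv: "P v = 4 ^ m" unfolding P_def using dv by simp
  have Pnb: "P x \<le> 4 * P y" if "x < m" "y < m" "R x y" for x y
  proof -
    have "m - d x \<le> Suc (m - d y)" using dnb[OF that] by simp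
    hence "(4::real) ^ (m - d x) \<le> 4 ^ Suc (m - d y)" by (rule power_increasing) simp
    thus ?thesis unfolding P_def by simp
  qed
  have Ppred: "4 * P x \<le> P y" if "x < m" "d y + 1 \<le> d x" for x y
  proof -
    have "Suc (m - d x) \<le> m - d y" using that dlt[OF that(1)] by simp
    hence "(4::real) ^ Suc (m - d x) \<le> 4 ^ (m - d y)" by (rule power_increasing) simp
    thus ?thesis unfolding P_def by simp
  qed
  have bounds: "\<forall>x<m. 0 \<le> phi x \<and> phi x \<le> 4 + 8 * 4 ^ m"
    using Ple Ppos unfolding phi_def T_def by (smt (verit))
  have fY: "finite {y. y < m \<and> R x y}" for x by simp
  have sup1: "\<forall>x<m. x \<noteq> v \<longrightarrow> 1 + (\<Sum>y\<in>{y. y < m \<and> R x y}. phi y) / 3 \<le> phi x"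
  proof (intro allI impI)
    fix x assume x: "x < m" "x \<noteq> v"
    let ?Y = "{y. y < m \<and> R x y}"
    obtain y0 where y0: "y0 < m" "R x y0" "d y0 + 1 \<le> d x" using dpred[OF x] by blast
    have y0Y: "y0 \<in> ?Y" using y0 by simp
    have c: "card (?Y - {y0}) = 2" using deg x(1) y0Y by simp
    have "(\<Sum>y\<in>?Y. phi y) = phi y0 + (\<Sum>y\<in>?Y - {y0}. phi y)"
      using sum.remove[OF fY y0Y] .
    also have "phi y0 \<le> T - 8 * P x" using Ppred[OF x(1) y0(3)] unfolding phi_def by simp
    also have "(\<Sum>y\<in>?Y - {y0}. phi y) \<le> (\<Sum>y\<in>?Y - {y0}. T - P x / 2)"
      by (rule sum_mono) (use Pnb[OF x(1)] in \<open>auto simp: phi_def\<close>)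
    also have "\<dots> = 2 * (T - P x / 2)" using c by simp
    finally have "(\<Sum>y\<in>?Y. phi y) \<le> 3 * T - 9 * P x" by simp
    thus "1 + (\<Sum>y\<in>?Y. phi y) / 3 \<le> phi x" using Pge[OF x(1)] unfolding phi_def by simp
  qed
  have sup2: "1 + (\<Sum>y\<in>{y. y < m \<and> R v y}. phi y) / 4 \<le> phi v"
  proof -
    let ?Y = "{y. y < m \<and> R v y}"
    have c: "card ?Y = 3" using deg v by simp
    have "(\<Sum>y\<in>?Y. phi y) \<le> (\<Sum>y\<in>?Y. T - 2 * (4 ^ m / 4))"
    proof (rule sum_mono)
      fix y assume y: "y \<in> ?Y"
      have "P v \<le> 4 * P y" using Pnb[of v y] y v by simp
      thus "phi y \<le> T - 2 * (4 ^ m / 4)" unfolding phi_def using Pv by simp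
    qed
    also have "\<dots> = 3 * (T - 2 * (4 ^ m / 4))" using c by simp
    finally have S: "(\<Sum>y\<in>?Y. phi y) \<le> 3 * (T - 2 * (4 ^ m / 4))" .
    have z: "(0::real) \<le> 4 ^ m" by simp
    have key: "s \<le> 3 * (4 + 8 * X - 2 * (X / 4)) \<Longrightarrow> 0 \<le> X \<Longrightarrow> 1 + s / 4 \<le> 4 + 8 * X - 2 * X" for s X :: real
      by (simp add: field_simps)
    show ?thesis using key[OF S[unfolded T_def] z] unfolding phi_def Pv T_def .
  qed
  show ?thesis using bounds sup1 sup2 by blast
qed


lemma srw_sum:
  "(\<Sum>w\<in>{w. adj v w}. srw_prob adj v w * F w) = (\<Sum>w\<in>{w. adj v w}. F w) / real (card {w. adj v w})"
  by (simp add: srw_prob_def sum_divide_distrib)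

lemma sum_split_ab2:
  fixes F :: "'v \<Rightarrow> real"
  assumes fin: "finite {w. adj v w}" and ab: "a \<noteq> b"
  shows "(\<Sum>w\<in>{w. adj v w}. srw_prob adj v w * F w) =
     srw_prob adj v a * F a + srw_prob adj v b * F b + (\<Sum>w\<in>{w. adj v w \<and> w \<noteq> a \<and> w \<noteq> b}. srw_prob adj v w * F w)"
proof -
  let ?N = "{w. adj v w}"
  have "(\<Sum>w\<in>?N. srw_prob adj v w * F w) = (\<Sum>w\<in>?N. srw_prob adj v w * F w * (if w = a \<or> w = b then 1 else 0))
     + (\<Sum>w\<in>{w\<in>?N. w \<noteq> a \<and> w \<noteq> b}. srw_prob adj v w * F w)"
    by (rule sum_split_ab[OF fin])
  moreover have "{w\<in>?N. w \<noteq> a \<and> w \<noteq> b} = {w. adj v w \<and> w \<noteq> a \<and> w \<noteq> b}" by auto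
  moreover have "(\<Sum>w\<in>?N. srw_prob adj v w * F w * (if w = a \<or> w = b then 1 else 0)) =
     (\<Sum>w\<in>?N \<inter> {a, b}. srw_prob adj v w * F w)"
    using fin by (simp add: sum.inter_restrict if_distrib cong: if_cong)
  moreover have "(\<Sum>w\<in>?N \<inter> {a, b}. srw_prob adj v w * F w) = srw_prob adj v a * F a + srw_prob adj v b * F b"
  proof -
    have "(\<Sum>w\<in>?N \<inter> {a, b}. srw_prob adj v w * F w) = (\<Sum>w\<in>{a, b}. srw_prob adj v w * F w)"
      by (rule sum.mono_neutral_left) (auto simp: srw_prob_def)
    thus ?thesis using ab by simp
  qed
  ultimately show ?thesis by simp
qed

definition PhiOK :: "nat \<Rightarrow> (nat \<Rightarrow> nat \<Rightarrow> bool) \<Rightarrow> nat \<Rightarrow> (nat \<Rightarrow> real) \<Rightarrow> bool" where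
  "PhiOK m R v phi \<longleftrightarrow> (\<forall>x<m. 0 \<le> phi x \<and> phi x \<le> 4 + 8 * 4 ^ m) \<and>
     (\<forall>x<m. x \<noteq> v \<longrightarrow> 1 + (\<Sum>y\<in>{y. y < m \<and> R x y}. phi y) / 3 \<le> phi x) \<and>
     1 + (\<Sum>y\<in>{y. y < m \<and> R v y}. phi y) / 4 \<le> phi v"

definition grf :: "nat \<Rightarrow> nat \<Rightarrow> nat \<Rightarrow> real" where
  "grf H c a = real (min a c) * (real H - real (max a c)) / real H"

lemma grf_nonneg: "a \<le> H \<Longrightarrow> c \<le> H \<Longrightarrow> 0 \<le> grf H c a"
  unfolding grf_def by (auto intro!: divide_nonneg_nonneg mult_nonneg_nonneg)

lemma grf_le: "a \<le> H \<Longrightarrow> c \<le> H \<Longrightarrow> grf H c a \<le> real c"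
proof -
  assume a: "a \<le> H" and c: "c \<le> H"
  show ?thesis
  proof (cases "H = 0")
    case True then show ?thesis by (simp add: grf_def)
  next
    case False
    have "real (min a c) * (real H - real (max a c)) \<le> real c * real H"
      by (rule mult_mono) (use a c in auto)
    thus ?thesis using False unfolding grf_def by (simp add: divide_le_eq)
  qed
qed

lemma grf_top: "grf H c H = 0" "grf H c 0 = 0" if "c \<le> H"
  using that by (auto simp: grf_def max_def)

lemma grf_step:
  assumes "0 < H" "1 \<le> a" "a + 1 \<le> H" "1 \<le> c" "c \<le> H"
  shows "grf H c (a - 1) + grf H c (a + 1) = 2 * grf H c a - (if a = c then 1 else 0)"
proof -
  consider "a < c" | "a = c" | "c < a" by arith
  then show ?thesis
  proof cases
    case 1
    hence "min (a - 1) c = a - 1" "max (a - 1) c = c" "min (a + 1) c = a + 1" "max (a+1) c = c"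
      "min a c = a" "max a c = c" by auto
    then show ?thesis using 1 assms unfolding grf_def by (simp add: of_nat_diff field_simps)
  next
    case 2
    hence "min (a - 1) c = a - 1" "max (a - 1) c = c" "min (a + 1) c = c" "max (a+1) c = a + 1"
      "min a c = a" "max a c = a" by auto
    then show ?thesis using 2 assms unfolding grf_def by (simp add: of_nat_diff field_simps)
  next
    case 3
    hence "min (a - 1) c = c" "max (a - 1) c = a - 1" "min (a + 1) c = c" "max (a+1) c = a + 1"
      "min a c = c" "max a c = a" by auto
    then show ?thesis using 3 assms unfolding grf_def by (simp add: of_nat_diff field_simps)
  qed
qed

locale Gr =
  fixes \<rho> :: real and h n :: "nat \<Rightarrow> nat" and E :: "nat \<Rightarrow> nat \<Rightarrow> nat \<Rightarrow> bool" and vv :: "nat \<Rightarrow> nat"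
  assumes rho: "\<rho> < 1" and hmono: "strict_mono h" and h0: "0 < h 0"
    and exps: "\<And>i. 1 \<le> i \<Longrightarrow> cubic_expander \<rho> (n i) (E i)" and vvn: "\<And>i. 1 \<le> i \<Longrightarrow> vv i < n i"
begin

abbreviation "adj \<equiv> adjG h n E vv"

lemma h_ge: "j \<le> h j" using hmono by (rule strict_mono_imp_increasing)
lemma h_pos: "0 < h j"
proof -
  have "h 0 \<le> h j" using hmono by (simp add: strict_mono_less_eq)
  thus ?thesis using h0 by simp
qed
lemma h_inj: "h i = h j \<longleftrightarrow> i = j" using hmono strict_mono_eq by blast
lemma h_less: "h i < h j \<longleftrightarrow> i < j" using hmono strict_mono_less by blast

lemma adj_LL[simp]: "adj (L a) (L b) \<longleftrightarrow> a = b + 1 \<or> b = a + 1" by (simp add: adjG_def)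
lemma adj_LX[simp]: "adj (L a) (X j y) \<longleftrightarrow> 1 \<le> j \<and> y = vv j \<and> a = h j" by (simp add: adjG_def)
lemma adj_XL[simp]: "adj (X i x) (L b) \<longleftrightarrow> 1 \<le> i \<and> x = vv i \<and> b = h i" by (simp add: adjG_def)
lemma adj_XX[simp]: "adj (X i x) (X j y) \<longleftrightarrow> i = j \<and> 1 \<le> i \<and> x < n i \<and> y < n i \<and> E i x y" by (simp add: adjG_def)

lemma nbrL: "{w. adj (L a) w} = L ` {b. a = b + 1 \<or> b = a + 1} \<union> (\<lambda>j. X j (vv j)) ` {j. 1 \<le> j \<and> h j = a}"
unfolding set_eq_iff proof
  fix w show "w \<in> {w. adj (L a) w} \<longleftrightarrow> w \<in> L ` {b. a = b + 1 \<or> b = a + 1} \<union> (\<lambda>j. X j (vv j)) ` {j. 1 \<le> j \<and> h j = a}"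
    by (cases w) auto
qed

lemma nbrL_plain: assumes "1 \<le> a" "\<forall>j\<ge>1. h j \<noteq> a"
  shows "{w. adj (L a) w} = {L (a - 1), L (a + 1)}"
  unfolding nbrL using assms by (auto simp: image_def)

lemma nbrL_hub: assumes "1 \<le> j"
  shows "{w. adj (L (h j)) w} = {L (h j - 1), L (h j + 1), X j (vv j)}"
proof -
  have "{j'. 1 \<le> j' \<and> h j' = h j} = {j}" using assms h_inj by auto
  moreover have "{b. h j = b + 1 \<or> b = h j + 1} = {h j - 1, h j + 1}" using h_pos[of j] by auto
  ultimately show ?thesis unfolding nbrL by auto
qed

lemma nbrL0: "{w. adj (L 0) w} = {L 1}"
proof -
  have A: "{j. 1 \<le> j \<and> h j = 0} = {}" using h_pos by auto
  have B: "{b. (0::nat) = b + 1 \<or> b = 0 + 1} = {1}" by auto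
  show ?thesis unfolding nbrL A B by simp
qed

lemma nbrX: assumes "1 \<le> i" "x < n i"
  shows "{w. adj (X i x) w} = X i ` {y. y < n i \<and> E i x y} \<union> (if x = vv i then {L (h i)} else {})"
unfolding set_eq_iff proof
  fix w show "w \<in> {w. adj (X i x) w} \<longleftrightarrow> w \<in> X i ` {y. y < n i \<and> E i x y} \<union> (if x = vv i then {L (h i)} else {})"
    using assms by (cases w) auto
qed

lemma fin_nbr: "finite {w. adj u w}"
proof (cases u)
  case (L a)
  have "{j. 1 \<le> j \<and> h j = a} \<subseteq> {..a}" using h_ge by auto
  hence "finite {j. 1 \<le> j \<and> h j = a}" by (rule finite_subset) simp
  moreover have "{b. a = b + 1 \<or> b = a + 1} \<subseteq> {..a+1}" by auto
  hence "finite {b. a = b + 1 \<or> b = a + 1}" by (rule finite_subset) simp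
  ultimately show ?thesis unfolding L nbrL by simp
next
  case (X i x)
  have "{w. adj (X i x) w} \<subseteq> X i ` {..<n i} \<union> {L (h i)}"
  proof
    fix w assume "w \<in> {w. adj (X i x) w}"
    thus "w \<in> X i ` {..<n i} \<union> {L (h i)}" by (cases w) auto
  qed
  thus ?thesis unfolding X by (rule finite_subset) simp
qed

lemma card_E: "1 \<le> i \<Longrightarrow> x < n i \<Longrightarrow> card {y. y < n i \<and> E i x y} = 3"
  using exps unfolding cubic_expander_def by blast

lemma vertex_closed: "is_vertex n u \<Longrightarrow> adj u w \<Longrightarrow> is_vertex n w"
  by (cases u; cases w) (auto simp: is_vertex_def vvn)

lemma nbr_ne: "is_vertex n u \<Longrightarrow> {w. adj u w} \<noteq> {}"
proof (cases u)
  case (L a)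
  then show ?thesis by (auto intro!: exI[of _ "L (a+1)"])
next
  case (X i x)
  assume "is_vertex n u"
  hence ix: "1 \<le> i" "x < n i" using X by (auto simp: is_vertex_def)
  have "{y. y < n i \<and> E i x y} \<noteq> {}" using card_E[OF ix] by (metis card.empty zero_neq_numeral)
  then obtain y where "y < n i" "E i x y" by auto
  thus ?thesis using X ix by (auto intro!: exI[of _ "X i y"])
qed

lemma ht_step: "adj u w \<Longrightarrow> ht h w \<noteq> H \<Longrightarrow> ht h u < H \<Longrightarrow> w \<noteq> L H \<Longrightarrow> ht h w < H"
  by (cases u; cases w) (auto simp: ht_def)

lemma region_closed:
  assumes "u \<in> {u. is_vertex n u \<and> ht h u < H}" "adj u w" "w \<noteq> L H"
  shows "w \<in> {u. is_vertex n u \<and> ht h u < H}"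
proof -
  have "ht h w < H" using assms by (cases u; cases w) (auto simp: ht_def)
  thus ?thesis using vertex_closed assms by auto
qed

lemma harmonic_ht:
  assumes "is_vertex n u" "u \<noteq> L 0"
  shows "(\<Sum>w\<in>{w. adj u w}. srw_prob adj u w * real (ht h w)) = real (ht h u)"
proof (cases u)
  case (L a)
  have a: "1 \<le> a" using assms L by auto
  show ?thesis
  proof (cases "\<exists>j\<ge>1. h j = a")
    case True
    then obtain j where j: "1 \<le> j" "h j = a" by auto
    have d: "L (h j - 1) \<noteq> L (h j + 1)" "L (h j - 1) \<noteq> X j (vv j)" "L (h j + 1) \<noteq> X j (vv j)" by auto
    have "(\<Sum>w\<in>{w. adj (L (h j)) w}. srw_prob adj (L (h j)) w * real (ht h w)) =
       (\<Sum>w\<in>{w. adj (L (h j)) w}. real (ht h w)) / real (card {w. adj (L (h j)) w})" by (rule srw_sum)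
    also have "\<dots> = real (h j)" unfolding nbrL_hub[OF j(1)] using d h_pos[of j] by (simp add: ht_def of_nat_diff)
    finally show ?thesis unfolding L j(2)[symmetric] by (simp add: ht_def)
  next
    case False
    hence nh: "\<forall>j\<ge>1. h j \<noteq> a" by auto
    have "(\<Sum>w\<in>{w. adj (L a) w}. srw_prob adj (L a) w * real (ht h w)) =
       (\<Sum>w\<in>{w. adj (L a) w}. real (ht h w)) / real (card {w. adj (L a) w})" by (rule srw_sum)
    also have "\<dots> = real a" unfolding nbrL_plain[OF a nh] using a by (simp add: ht_def of_nat_diff)
    finally show ?thesis unfolding L by (simp add: ht_def)
  qed
next
  case (X i x)
  have ix: "1 \<le> i" "x < n i" using assms X by (auto simp: is_vertex_def)
  have "\<forall>w\<in>{w. adj u w}. ht h w = h i" using X by (auto simp: ht_def split: vert.split)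
  hence e2: "(\<Sum>w\<in>{w. adj u w}. real (ht h w)) = real (card {w. adj u w}) * real (h i)" by simp
  have c: "real (card {w. adj u w}) \<noteq> 0" using nbr_ne[OF assms(1)] fin_nbr by simp
  have e1: "(\<Sum>w\<in>{w. adj u w}. srw_prob adj u w * real (ht h w)) =
       (\<Sum>w\<in>{w. adj u w}. real (ht h w)) / real (card {w. adj u w})" by (rule srw_sum)
  have htu: "ht h u = h i" using X by (simp add: ht_def)
  have "(\<Sum>w\<in>{w. adj u w}. srw_prob adj u w * real (ht h w)) = real (card {w. adj u w}) * real (h i) / real (card {w. adj u w})"
    unfolding e1 e2 ..
  also have "\<dots> = real (h i)" using c by simp
  finally show ?thesis using htu by simp
qed


definition phi :: "nat \<Rightarrow> nat \<Rightarrow> real" where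
  "phi j = (SOME f. PhiOK (n j) (E j) (vv j) f)"

lemma phi_ok: assumes "1 \<le> j" shows "PhiOK (n j) (E j) (vv j) (phi j)"
  using expander_phi[OF exps[OF assms] rho vvn[OF assms]] unfolding phi_def PhiOK_def by (rule someI_ex)

definition JJ :: "nat \<Rightarrow> nat set" where "JJ H = {j. 1 \<le> j \<and> h j < H}"

lemma JJ_fin: "finite (JJ H)"
proof -
  have "JJ H \<subseteq> {..<H}" unfolding JJ_def using h_ge by (auto intro: le_less_trans)
  thus ?thesis by (rule finite_subset) simp
qed

definition cc :: "nat \<Rightarrow> real" where "cc j = 1 + phi j (vv j)"

lemma phi_nonneg: "1 \<le> j \<Longrightarrow> x < n j \<Longrightarrow> 0 \<le> phi j x"
  using phi_ok unfolding PhiOK_def by blast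
lemma phi_le: "1 \<le> j \<Longrightarrow> x < n j \<Longrightarrow> phi j x \<le> 4 + 8 * 4 ^ n j"
  using phi_ok unfolding PhiOK_def by blast
lemma cc_ge: "1 \<le> j \<Longrightarrow> 1 \<le> cc j" using phi_nonneg[of j "vv j"] vvn unfolding cc_def by simp
lemma cc_le: "1 \<le> j \<Longrightarrow> cc j \<le> 5 + 8 * 4 ^ n j" using phi_le[of j "vv j"] vvn unfolding cc_def by simp

definition gL :: "nat \<Rightarrow> nat \<Rightarrow> real" where
  "gL H a = real a * (real H - real a) + (\<Sum>j\<in>JJ H. cc j * grf H (h j) a)"

definition gG :: "nat \<Rightarrow> vert \<Rightarrow> real" where
  "gG H u = (case u of L a \<Rightarrow> gL H a | X j x \<Rightarrow> gL H (h j) + phi j x)"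

lemma gL_zero: "gL H H = 0" "gL H 0 = 0"
proof -
  have "\<forall>j\<in>JJ H. grf H (h j) H = 0 \<and> grf H (h j) 0 = 0" unfolding JJ_def using grf_top by auto
  thus "gL H H = 0" "gL H 0 = 0" unfolding gL_def by simp_all
qed

lemma gL_nonneg: "a \<le> H \<Longrightarrow> 0 \<le> gL H a"
  unfolding gL_def JJ_def
  by (intro add_nonneg_nonneg mult_nonneg_nonneg sum_nonneg)
     (auto intro!: mult_nonneg_nonneg grf_nonneg cc_ge[THEN order_trans[rotated]])

lemma gL_step:
  assumes "1 \<le> a" "a + 1 \<le> H"
  shows "gL H (a - 1) + gL H (a + 1) = 2 * gL H a - 2 - (\<Sum>j\<in>JJ H. if h j = a then cc j else 0)"
proof -
  have H: "0 < H" using assms by simp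
  have q: "real (a - 1) * (real H - real (a - 1)) + real (a + 1) * (real H - real (a + 1)) = 2 * (real a * (real H - real a)) - 2"
    using assms by (simp add: of_nat_diff algebra_simps)
  have s: "(\<Sum>j\<in>JJ H. cc j * grf H (h j) (a - 1)) + (\<Sum>j\<in>JJ H. cc j * grf H (h j) (a + 1)) =
    2 * (\<Sum>j\<in>JJ H. cc j * grf H (h j) a) - (\<Sum>j\<in>JJ H. if h j = a then cc j else 0)"
  proof -
    have "\<forall>j\<in>JJ H. cc j * grf H (h j) (a - 1) + cc j * grf H (h j) (a + 1) = 2 * (cc j * grf H (h j) a) - (if h j = a then cc j else 0)"
    proof
      fix j assume j: "j \<in> JJ H"
      have "grf H (h j) (a - 1) + grf H (h j) (a + 1) = 2 * grf H (h j) a - (if a = h j then 1 else 0)"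
        by (rule grf_step) (use H assms j h_pos[of j] in \<open>auto simp: JJ_def\<close>)
      hence "cc j * (grf H (h j) (a - 1) + grf H (h j) (a + 1)) = cc j * (2 * grf H (h j) a - (if a = h j then 1 else 0))"
        by simp
      thus "cc j * grf H (h j) (a - 1) + cc j * grf H (h j) (a + 1) = 2 * (cc j * grf H (h j) a) - (if h j = a then cc j else 0)"
        by (cases "a = h j") (simp_all add: algebra_simps)
    qed
    hence "(\<Sum>j\<in>JJ H. cc j * grf H (h j) (a - 1) + cc j * grf H (h j) (a + 1)) = (\<Sum>j\<in>JJ H. 2 * (cc j * grf H (h j) a) - (if h j = a then cc j else 0))"
      by (intro sum.cong refl) blast
    thus ?thesis by (simp add: sum.distrib sum_subtractf sum_distrib_left)
  qed
  show ?thesis unfolding gL_def using q s by (simp add: algebra_simps)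
qed

lemma hub_sum_plain: "\<forall>j\<ge>1. h j \<noteq> a \<Longrightarrow> (\<Sum>j\<in>JJ H. if h j = a then cc j else 0) = 0"
  unfolding JJ_def by (rule sum.neutral) auto

lemma hub_sum_hub: "1 \<le> j \<Longrightarrow> h j < H \<Longrightarrow> (\<Sum>j'\<in>JJ H. if h j' = h j then cc j' else 0) = cc j"
proof -
  assume j: "1 \<le> j" "h j < H"
  have "(\<Sum>j'\<in>JJ H. if h j' = h j then cc j' else 0) = (\<Sum>j'\<in>JJ H. if j' = j then cc j' else 0)"
    using h_inj by (intro sum.cong) auto
  also have "\<dots> = cc j" using j JJ_fin by (simp add: JJ_def)
  finally show ?thesis .
qed


lemma gG_L0: "gG H (L H) = 0" "gG H (L 0) = 0" by (simp_all add: gG_def gL_zero)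

lemma gG_nonneg: assumes "is_vertex n u" "ht h u < H" shows "0 \<le> gG H u"
proof (cases u)
  case (L a) then show ?thesis using assms gL_nonneg by (simp add: gG_def ht_def)
next
  case (X j x)
  have "1 \<le> j" "x < n j" "h j < H" using assms X by (auto simp: is_vertex_def ht_def)
  then show ?thesis using X gL_nonneg[of "h j" H] phi_nonneg[of j x] by (simp add: gG_def)
qed

lemma sumX:
  assumes "1 \<le> j" "x < n j"
  shows "(\<Sum>w\<in>{w. adj (X j x) w}. F w) = (\<Sum>y\<in>{y. y < n j \<and> E j x y}. F (X j y)) + (if x = vv j then F (L (h j)) else 0)"
    and "card {w. adj (X j x) w} = 3 + (if x = vv j then 1 else 0)"
proof -
  let ?Y = "{y. y < n j \<and> E j x y}"
  let ?S = "(if x = vv j then {L (h j)} else {})"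
  have fY: "finite ?Y" by simp
  have inj: "inj_on (X j) ?Y" by (auto simp: inj_on_def)
  have disj: "X j ` ?Y \<inter> ?S = {}" by auto
  have "(\<Sum>w\<in>{w. adj (X j x) w}. F w) = (\<Sum>w\<in>X j ` ?Y. F w) + (\<Sum>w\<in>?S. F w)"
    unfolding nbrX[OF assms] by (rule sum.union_disjoint) (use fY disj in auto)
  also have "(\<Sum>w\<in>X j ` ?Y. F w) = (\<Sum>y\<in>?Y. F (X j y))" by (rule sum.reindex_cong[OF inj refl refl])
  finally show "(\<Sum>w\<in>{w. adj (X j x) w}. F w) = (\<Sum>y\<in>?Y. F (X j y)) + (if x = vv j then F (L (h j)) else 0)"
    by simp
  have "card {w. adj (X j x) w} = card (X j ` ?Y) + card ?S"
    unfolding nbrX[OF assms] by (rule card_Un_disjoint) (use fY disj in auto)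
  also have "card (X j ` ?Y) = 3" using card_image[OF inj] card_E[OF assms] by simp
  finally show "card {w. adj (X j x) w} = 3 + (if x = vv j then 1 else 0)" by simp
qed

lemma super:
  assumes H: "1 \<le> H" and u: "is_vertex n u" "ht h u < H" "u \<noteq> L H" "u \<noteq> L 0"
  shows "1 + (\<Sum>w\<in>{w. adj u w \<and> w \<noteq> L H \<and> w \<noteq> L 0}. srw_prob adj u w * gG H w) \<le> gG H u"
proof -
  have sp: "(\<Sum>w\<in>{w. adj u w}. srw_prob adj u w * gG H w) =
     srw_prob adj u (L H) * gG H (L H) + srw_prob adj u (L 0) * gG H (L 0) +
     (\<Sum>w\<in>{w. adj u w \<and> w \<noteq> L H \<and> w \<noteq> L 0}. srw_prob adj u w * gG H w)"
    by (rule sum_split_ab2[OF fin_nbr]) (use H in simp)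
  have av: "(\<Sum>w\<in>{w. adj u w}. srw_prob adj u w * gG H w) = (\<Sum>w\<in>{w. adj u w}. gG H w) / real (card {w. adj u w})"
    by (rule srw_sum)
  have key: "1 + (\<Sum>w\<in>{w. adj u w}. gG H w) / real (card {w. adj u w}) \<le> gG H u"
  proof (cases u)
    case (L a)
    have a: "1 \<le> a" "a + 1 \<le> H" using u L by (auto simp: ht_def)
    show ?thesis
    proof (cases "\<exists>j\<ge>1. h j = a")
      case True
      then obtain j where j: "1 \<le> j" "h j = a" by auto
      have hjH: "h j < H" using j a by simp
      have d: "L (h j - 1) \<noteq> L (h j + 1)" "L (h j - 1) \<noteq> X j (vv j)" "L (h j + 1) \<noteq> X j (vv j)" by auto
      have st: "gL H (a - 1) + gL H (a + 1) = 2 * gL H a - 2 - cc j"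
        using gL_step[OF a] hub_sum_hub[OF j(1) hjH] j(2) by simp
      have "(\<Sum>w\<in>{w. adj u w}. gG H w) = gL H (a - 1) + gL H (a + 1) + (gL H a + phi j (vv j))"
        unfolding L j(2)[symmetric] nbrL_hub[OF j(1)] using d by (simp add: gG_def)
      also have "\<dots> = 3 * gL H a - 3" using st unfolding cc_def by simp
      finally have "(\<Sum>w\<in>{w. adj u w}. gG H w) = 3 * gL H a - 3" .
      moreover have "card {w. adj u w} = 3" unfolding L j(2)[symmetric] nbrL_hub[OF j(1)] using d by simp
      ultimately show ?thesis using L by (simp add: gG_def field_simps)
    next
      case False
      hence nh: "\<forall>j\<ge>1. h j \<noteq> a" by auto
      have st: "gL H (a - 1) + gL H (a + 1) = 2 * gL H a - 2"
        using gL_step[OF a] hub_sum_plain[OF nh] by simp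
      have d: "L (a - 1) \<noteq> L (a + 1)" by simp
      have "(\<Sum>w\<in>{w. adj u w}. gG H w) = 2 * gL H a - 2"
        unfolding L nbrL_plain[OF a(1) nh] using d st by (simp add: gG_def)
      moreover have "card {w. adj u w} = 2" unfolding L nbrL_plain[OF a(1) nh] using d by simp
      ultimately show ?thesis using L by (simp add: gG_def field_simps)
    qed
  next
    case (X j x)
    have jx: "1 \<le> j" "x < n j" using u X by (auto simp: is_vertex_def)
    let ?Y = "{y. y < n j \<and> E j x y}"
    have ok: "PhiOK (n j) (E j) (vv j) (phi j)" by (rule phi_ok[OF jx(1)])
    have cY: "card ?Y = 3" by (rule card_E[OF jx])
    have sY: "(\<Sum>y\<in>?Y. gG H (X j y)) = 3 * gL H (h j) + (\<Sum>y\<in>?Y. phi j y)"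
      using cY by (simp add: gG_def sum.distrib)
    show ?thesis
    proof (cases "x = vv j")
      case True
      have "(\<Sum>w\<in>{w. adj u w}. gG H w) = 4 * gL H (h j) + (\<Sum>y\<in>?Y. phi j y)"
        unfolding X sumX(1)[OF jx] using True sY by (simp add: gG_def)
      moreover have "card {w. adj u w} = 4" unfolding X sumX(2)[OF jx] using True by simp
      moreover have "1 + (\<Sum>y\<in>?Y. phi j y) / 4 \<le> phi j x" using ok True unfolding PhiOK_def by simp
      ultimately show ?thesis using X by (simp add: gG_def field_simps)
    next
      case False
      have "(\<Sum>w\<in>{w. adj u w}. gG H w) = 3 * gL H (h j) + (\<Sum>y\<in>?Y. phi j y)"
        unfolding X sumX(1)[OF jx] using False sY by simp
      moreover have "card {w. adj u w} = 3" unfolding X sumX(2)[OF jx] using False by simp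
      moreover have "1 + (\<Sum>y\<in>?Y. phi j y) / 3 \<le> phi j x" using ok False jx unfolding PhiOK_def by simp
      ultimately show ?thesis using X by (simp add: gG_def field_simps)
    qed
  qed
  show ?thesis using sp av key by (simp add: gG_L0)
qed

lemma gL_bound: assumes "a \<le> H" shows "gL H a \<le> real H ^ 2 / 4 + (\<Sum>j\<in>JJ H. (5 + 8 * 4 ^ n j) * real (h j))"
proof -
  have q: "real a * (real H - real a) \<le> real H ^ 2 / 4"
  proof -
    have "0 \<le> (real H - 2 * real a) ^ 2" by simp
    thus ?thesis by (simp add: power2_eq_square algebra_simps)
  qed
  have s: "(\<Sum>j\<in>JJ H. cc j * grf H (h j) a) \<le> (\<Sum>j\<in>JJ H. (5 + 8 * 4 ^ n j) * real (h j))"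
  proof (rule sum_mono)
    fix j assume j: "j \<in> JJ H"
    hence j1: "1 \<le> j" and hj: "h j < H" by (auto simp: JJ_def)
    show "cc j * grf H (h j) a \<le> (5 + 8 * 4 ^ n j) * real (h j)"
      by (rule mult_mono[OF cc_le[OF j1] grf_le]) (use assms hj cc_ge[OF j1] grf_nonneg[of a H "h j"] in auto)
  qed
  show ?thesis unfolding gL_def using q s by simp
qed

lemma gG_bound: assumes "is_vertex n u" "ht h u < H"
  shows "gG H u \<le> real H ^ 2 / 4 + 2 * (\<Sum>j\<in>JJ H. (5 + 8 * 4 ^ n j) * real (h j))"
proof -
  have S0: "0 \<le> (\<Sum>j\<in>JJ H. (5 + 8 * 4 ^ n j) * real (h j))" by (intro sum_nonneg) simp
  show ?thesis
  proof (cases u)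
    case (L a) then show ?thesis using assms gL_bound[of a H] S0 by (simp add: gG_def ht_def)
  next
    case (X j x)
    have jx: "1 \<le> j" "x < n j" "h j < H" using assms X by (auto simp: is_vertex_def ht_def)
    have "phi j x \<le> 4 + 8 * 4 ^ n j" by (rule phi_le[OF jx(1,2)])
    also have "\<dots> \<le> (5 + 8 * 4 ^ n j) * real (h j)"
    proof -
      have "1 \<le> real (h j)" using h_pos[of j] by simp
      hence "(5 + 8 * 4 ^ n j) * 1 \<le> (5 + 8 * 4 ^ n j) * real (h j)" by (intro mult_left_mono) auto
      thus ?thesis by simp
    qed
    also have "\<dots> \<le> (\<Sum>j\<in>JJ H. (5 + 8 * 4 ^ n j) * real (h j))"
      by (rule member_le_sum) (use jx JJ_fin in \<open>auto simp: JJ_def\<close>)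
    finally have "phi j x \<le> (\<Sum>j\<in>JJ H. (5 + 8 * 4 ^ n j) * real (h j))" .
    then show ?thesis using X gL_bound[of "h j" H] jx by (simp add: gG_def)
  qed
qed


lemma part2_raw:
  assumes H: "1 \<le> H" and v: "is_vertex n v" "ht h v < H"
  shows "exp_exit adj v (L H) (L 0) \<le> ennreal (1 + (real H ^ 2 / 4 + 2 * (\<Sum>j\<in>JJ H. (5 + 8 * 4 ^ n j) * real (h j))))"
    and "(\<lambda>t. Qf adj (L H) (L 0) t v) \<longlonglongrightarrow> 0"
proof -
  let ?R = "{u. is_vertex n u \<and> ht h u < H}"
  let ?Gb = "real H ^ 2 / 4 + 2 * (\<Sum>j\<in>JJ H. (5 + 8 * 4 ^ n j) * real (h j))"
  let ?N = "{w. adj v w \<and> w \<noteq> L H \<and> w \<noteq> L 0}"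
  have fin: "\<And>u. finite {w. adj u w}" by (rule fin_nbr)
  have ne: "\<And>u. u \<in> ?R \<Longrightarrow> {w. adj u w} \<noteq> {}" using nbr_ne by blast
  have clo: "\<And>u w. u \<in> ?R \<Longrightarrow> adj u w \<Longrightarrow> w \<noteq> L H \<Longrightarrow> w \<noteq> L 0 \<Longrightarrow> w \<in> ?R"
    using region_closed by blast
  have g0: "\<And>u. u \<in> ?R \<Longrightarrow> 0 \<le> gG H u" using gG_nonneg by blast
  have sup: "\<And>u. u \<in> ?R \<Longrightarrow> u \<noteq> L H \<Longrightarrow> u \<noteq> L 0 \<Longrightarrow>
        1 + (\<Sum>w\<in>{w. adj u w \<and> w \<noteq> L H \<and> w \<noteq> L 0}. srw_prob adj u w * gG H w) \<le> gG H u"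
    using super[OF H] by blast
  have vR: "v \<in> ?R" using v by simp
  note B = exp_exit_bound[OF fin ne clo g0 sup vR]
  show "(\<lambda>t. Qf adj (L H) (L 0) t v) \<longlonglongrightarrow> 0" by (rule B(2))
  have "(\<Sum>w\<in>?N. srw_prob adj v w * gG H w) \<le> (\<Sum>w\<in>?N. srw_prob adj v w * ?Gb)"
  proof (rule sum_mono)
    fix w assume "w \<in> ?N"
    hence "w \<in> ?R" using clo[OF vR] by blast
    hence "gG H w \<le> ?Gb" using gG_bound by blast
    thus "srw_prob adj v w * gG H w \<le> srw_prob adj v w * ?Gb" by (rule mult_left_mono[OF _ srw_prob_nonneg])
  qed
  also have "\<dots> = (\<Sum>w\<in>?N. srw_prob adj v w) * ?Gb" by (simp add: sum_distrib_right)
  also have "\<dots> \<le> 1 * ?Gb"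
  proof (rule mult_right_mono)
    have "(\<Sum>w\<in>?N. srw_prob adj v w) \<le> (\<Sum>w\<in>{w. adj v w}. srw_prob adj v w)"
      by (rule sum_mono2[OF fin]) (auto simp: srw_prob_nonneg)
    also have "\<dots> = 1" by (rule srw_sum_one[where adj=adj and v=v, OF fin nbr_ne[OF v(1)]])
    finally show "(\<Sum>w\<in>?N. srw_prob adj v w) \<le> 1" .
    show "0 \<le> ?Gb" by (intro add_nonneg_nonneg mult_nonneg_nonneg sum_nonneg) auto
  qed
  finally have "1 + (\<Sum>w\<in>?N. srw_prob adj v w * gG H w) \<le> 1 + ?Gb" by simp
  hence "ennreal (1 + (\<Sum>w\<in>?N. srw_prob adj v w * gG H w)) \<le> ennreal (1 + ?Gb)" by (rule ennreal_leI)
  with B(1) show "exp_exit adj v (L H) (L 0) \<le> ennreal (1 + ?Gb)" by (rule order_trans)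
qed

lemma part1:
  assumes k: "1 \<le> k"
  shows "hit_before adj (L 0) (L k) (L 0) = ennreal (1 / real k)"
proof -
  let ?R = "{u. is_vertex n u \<and> ht h u < k}"
  define f where "f u = real (ht h u) / real k" for u
  have fin: "\<And>u. finite {w. adj u w}" by (rule fin_nbr)
  have clo: "\<And>u w. u \<in> ?R \<Longrightarrow> adj u w \<Longrightarrow> w \<noteq> L k \<Longrightarrow> w \<noteq> L 0 \<Longrightarrow> w \<in> ?R"
    using region_closed by blast
  have ab: "L k \<noteq> L 0" using k by simp
  have harm: "srw_prob adj u (L k) + (\<Sum>w\<in>{w. adj u w \<and> w \<noteq> L k \<and> w \<noteq> L 0}. srw_prob adj u w * f w) = f u"
    if u: "u \<in> ?R" "u \<noteq> L k" "u \<noteq> L 0" for u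
  proof -
    have "(\<Sum>w\<in>{w. adj u w}. srw_prob adj u w * f w) =
       srw_prob adj u (L k) * f (L k) + srw_prob adj u (L 0) * f (L 0) + (\<Sum>w\<in>{w. adj u w \<and> w \<noteq> L k \<and> w \<noteq> L 0}. srw_prob adj u w * f w)"
      by (rule sum_split_ab2[OF fin ab])
    moreover have "f (L k) = 1" "f (L 0) = 0" using k by (auto simp: f_def ht_def)
    moreover have "(\<Sum>w\<in>{w. adj u w}. srw_prob adj u w * f w) = f u"
    proof -
      have "(\<Sum>w\<in>{w. adj u w}. srw_prob adj u w * f w) = (\<Sum>w\<in>{w. adj u w}. srw_prob adj u w * real (ht h w)) / real k"
        by (simp add: f_def sum_divide_distrib)
      also have "\<dots> = f u" using harmonic_ht[of u] u by (simp add: f_def)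
      finally show ?thesis .
    qed
    ultimately show ?thesis by simp
  qed
  have f0: "\<And>u. u \<in> ?R \<Longrightarrow> 0 \<le> f u" by (simp add: f_def)
  have f1: "\<And>u. u \<in> ?R \<Longrightarrow> f u \<le> 1" using k by (simp add: f_def)
  have Qlim: "\<And>u. u \<in> ?R \<Longrightarrow> (\<lambda>t. Qf adj (L k) (L 0) t u) \<longlonglongrightarrow> 0"
    using part2_raw(2)[OF k] by blast
  have v: "L 0 \<in> ?R" using k by (simp add: is_vertex_def ht_def)
  have "hit_before adj (L 0) (L k) (L 0) = ennreal (srw_prob adj (L 0) (L k) + (\<Sum>w\<in>{w. adj (L 0) w \<and> w \<noteq> L k \<and> w \<noteq> L 0}. srw_prob adj (L 0) w * f w))"
    by (rule hit_before_value[OF fin clo harm f0 f1 Qlim v])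
  also have "srw_prob adj (L 0) (L k) + (\<Sum>w\<in>{w. adj (L 0) w \<and> w \<noteq> L k \<and> w \<noteq> L 0}. srw_prob adj (L 0) w * f w) = 1 / real k"
  proof (cases "k = 1")
    case True
    have e1: "{w. adj (L 0) w \<and> w \<noteq> L k \<and> w \<noteq> L 0} = {}" using nbrL0 True by auto
    have e2: "srw_prob adj (L 0) (L k) = 1" using True nbrL0 by (simp add: srw_prob_def)
    show ?thesis unfolding e1 e2 using True by simp
  next
    case False
    have e1: "{w. adj (L 0) w \<and> w \<noteq> L k \<and> w \<noteq> L 0} = {L 1}" using nbrL0 False by auto
    have e2: "srw_prob adj (L 0) (L k) = 0" using False by (simp add: srw_prob_def)
    have e3: "srw_prob adj (L 0) (L 1) = 1" using nbrL0 by (simp add: srw_prob_def)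
    show ?thesis unfolding e1 e2 using e3 by (simp add: f_def ht_def)
  qed
  finally show ?thesis .
qed


lemma JJ_eq: "JJ (h i) = {1..<i}" unfolding JJ_def using h_less by auto

lemma S_bound:
  assumes i: "1 \<le> i" and n0: "0 < n 0" and nm: "strict_mono n"
  shows "(\<Sum>j\<in>JJ (h i). (5 + 8 * 4 ^ n j) * real (h j)) \<le>
     real (n (i - 1) * h (i - 1) ^ 2) * 5 + real (n (i - 1) * h (i - 1) ^ 2) * 8 * 4 ^ (n (i - 1) * h (i - 1) ^ 2)"
proof -
  define i' where "i' = i - 1"
  define x where "x = n i' * h i' ^ 2"
  have n1: "1 \<le> n i'"
  proof -
    have "n 0 \<le> n i'" using nm by (simp add: strict_mono_less_eq)
    thus ?thesis using n0 by simp
  qed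
  have h1: "1 \<le> h i'" using h_pos[of i'] by simp
  have nx: "n i' \<le> x" unfolding x_def using h1 by simp
  have hx: "h i' * h i' \<le> x" unfolding x_def using n1 by (simp add: power2_eq_square)
  have "(\<Sum>j\<in>JJ (h i). (5 + 8 * 4 ^ n j) * real (h j)) \<le> real (card (JJ (h i))) * ((5 + 8 * 4 ^ n i') * real (h i'))"
  proof (rule sum_bounded_above)
    fix j assume "j \<in> JJ (h i)"
    hence j: "j \<le> i'" unfolding JJ_eq i'_def by auto
    have "n j \<le> n i'" "h j \<le> h i'" using j nm hmono by (simp_all add: strict_mono_less_eq)
    hence "(4::real) ^ n j \<le> 4 ^ n i'" by (intro power_increasing) auto
    thus "(5 + 8 * 4 ^ n j) * real (h j) \<le> (5 + 8 * 4 ^ n i') * real (h i')"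
      using \<open>h j \<le> h i'\<close> by (intro mult_mono) auto
  qed
  also have "card (JJ (h i)) = i'" unfolding JJ_eq i'_def by simp
  also have "real i' * ((5 + 8 * 4 ^ n i') * real (h i')) \<le> real (h i') * ((5 + 8 * 4 ^ n i') * real (h i'))"
    using h_ge[of i'] by (intro mult_right_mono) auto
  also have "\<dots> = real (h i' * h i') * (5 + 8 * 4 ^ n i')" by simp
  also have "\<dots> \<le> real x * (5 + 8 * 4 ^ x)"
  proof (rule mult_mono)
    show "real (h i' * h i') \<le> real x" using hx by (simp only: of_nat_le_iff)
    have "(4::real) ^ n i' \<le> 4 ^ x" using nx by (intro power_increasing) auto
    thus "5 + 8 * 4 ^ n i' \<le> 5 + 8 * (4::real) ^ x" by simp
  qed auto
  also have "\<dots> = real x * 5 + real x * 8 * 4 ^ x" by (simp add: algebra_simps)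
  finally show ?thesis unfolding x_def i'_def .
qed

end

theorem proposition4p3:
  fixes \<rho> :: real
  assumes "\<rho> < 1"
  shows "\<exists>F :: nat \<Rightarrow> nat. \<forall>(h :: nat \<Rightarrow> nat) (n :: nat \<Rightarrow> nat)
           (E :: nat \<Rightarrow> nat \<Rightarrow> nat \<Rightarrow> bool) (vv :: nat \<Rightarrow> nat).
     (strict_mono h \<and> strict_mono n \<and> 0 < h 0 \<and> 0 < n 0 \<and>
      (\<forall>i\<ge>1. n i = h i ^ 15 \<and> h i \<ge> F (n (i - 1) * h (i - 1) ^ 2)) \<and>
      (\<forall>i\<ge>1. cubic_expander \<rho> (n i) (E i) \<and> vv i < n i))
     \<longrightarrow>
     ((\<forall>k::nat. k \<ge> 1 \<longrightarrow>
         hit_before (adjG h n E vv) (L 0) (L k) (L 0) = ennreal (1 / real k)) \<and>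
      (\<forall>i\<ge>1. \<forall>v. is_vertex n v \<and> ht h v < h i \<longrightarrow>
         exp_exit (adjG h n E vv) v (L (h i)) (L 0) \<le> 2 * of_nat (h i) ^ 2))"
proof (intro exI[of _ "\<lambda>x. 27 * x * 4 ^ x"] allI impI)
  fix h n :: "nat \<Rightarrow> nat" and E :: "nat \<Rightarrow> nat \<Rightarrow> nat \<Rightarrow> bool" and vv :: "nat \<Rightarrow> nat"
  assume A: "strict_mono h \<and> strict_mono n \<and> 0 < h 0 \<and> 0 < n 0 \<and>
      (\<forall>i\<ge>1. n i = h i ^ 15 \<and> h i \<ge> 27 * (n (i - 1) * h (i - 1) ^ 2) * 4 ^ (n (i - 1) * h (i - 1) ^ 2)) \<and>
      (\<forall>i\<ge>1. cubic_expander \<rho> (n i) (E i) \<and> vv i < n i)"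
  hence hm: "strict_mono h" and nm: "strict_mono n" and h0: "0 < h 0" and n0: "0 < n 0"
    and HF: "\<And>i. 1 \<le> i \<Longrightarrow> h i \<ge> 27 * (n (i - 1) * h (i - 1) ^ 2) * 4 ^ (n (i - 1) * h (i - 1) ^ 2)"
    and EX: "\<And>i. 1 \<le> i \<Longrightarrow> cubic_expander \<rho> (n i) (E i)" and VV: "\<And>i. 1 \<le> i \<Longrightarrow> vv i < n i"
    by auto
  interpret G: Gr \<rho> h n E vv by unfold_locales (use assms hm h0 EX VV in auto)
  show "(\<forall>k::nat. k \<ge> 1 \<longrightarrow>
         hit_before (adjG h n E vv) (L 0) (L k) (L 0) = ennreal (1 / real k)) \<and>
      (\<forall>i\<ge>1. \<forall>v. is_vertex n v \<and> ht h v < h i \<longrightarrow>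
         exp_exit (adjG h n E vv) v (L (h i)) (L 0) \<le> 2 * of_nat (h i) ^ 2)"
  proof (intro conjI allI impI)
    fix k :: nat assume "k \<ge> 1"
    thus "hit_before (adjG h n E vv) (L 0) (L k) (L 0) = ennreal (1 / real k)" by (rule G.part1)
  next
    fix i v assume i: "1 \<le> i" and v: "is_vertex n v \<and> ht h v < h i"
    define H where "H = h i"
    define x where "x = n (i - 1) * h (i - 1) ^ 2"
    define S where "S = (\<Sum>j\<in>G.JJ H. (5 + 8 * 4 ^ n j) * real (h j))"
    have H1: "1 \<le> H" unfolding H_def using G.h_pos[of i] by simp
    have bd: "exp_exit (adjG h n E vv) v (L H) (L 0) \<le> ennreal (1 + (real H ^ 2 / 4 + 2 * S))"
      unfolding S_def by (rule G.part2_raw(1)[OF H1]) (use v H_def in auto)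
    have Sb: "S \<le> real x * 5 + real x * 8 * 4 ^ x" unfolding S_def x_def H_def by (rule G.S_bound[OF i n0 nm])
    have x1: "1 \<le> x"
    proof -
      have "n 0 \<le> n (i - 1)" using nm by (simp add: strict_mono_less_eq)
      moreover have "1 \<le> h (i - 1)" using G.h_pos[of "i - 1"] by simp
      ultimately show ?thesis unfolding x_def using n0 by simp
    qed
    define P where "P = real x * 4 ^ x"
    have Px: "real x \<le> P" unfolding P_def using x1 by simp
    have HP: "27 * P \<le> real H" unfolding P_def H_def x_def using HF[OF i]
      by (metis (mono_tags, lifting) of_nat_le_iff of_nat_mult of_nat_numeral of_nat_power mult.assoc)
    have HH: "real H \<le> real H ^ 2" using H1 by (simp add: power2_eq_square)
    have Sb': "S \<le> real x * 5 + 8 * P" using Sb unfolding P_def by (simp add: algebra_simps)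
    have x1': "1 \<le> real x" using x1 by simp
    have tot: "1 + (real H ^ 2 / 4 + 2 * S) \<le> 2 * real H ^ 2"
      using Sb' Px HP HH x1' by linarith
    have "ennreal (1 + (real H ^ 2 / 4 + 2 * S)) \<le> ennreal (2 * real H ^ 2)" by (rule ennreal_leI[OF tot])
    also have "ennreal (2 * real H ^ 2) = 2 * of_nat H ^ 2"
      by (simp add: ennreal_of_nat_eq_real_of_nat ennreal_mult ennreal_power)
    finally show "exp_exit (adjG h n E vv) v (L (h i)) (L 0) \<le> 2 * of_nat (h i) ^ 2"
      using bd unfolding H_def by (rule order_trans[rotated])
  qed
qed


end
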